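(* Let $(m,n)$ be relatively prime non-negative integers, $\mathscr{L}$ an $(m,n)$-periodic higher spin vertex configuration and $\mathcal{A}=\mathcal{A}(\mathscr{L})$. Let $\underline{i}=i_1\cdots i_\ell$ be a finite sequence with entries in $\{1,2\}$ and $\lambda\in\mathbb{Z}$. Then the following are equivalent: (i) $X(\underline{i})^\ast X(\underline{i})$ (an element of $\mathbb{C}[H]$) belongs to the principal ideal $(H-\lambda)$ of $\mathbb{C}[H]$; (ii) the based face path $\bar\pi(\underline{i},\lambda)$ intersects an edge in $\overline{\mathscr{L}}$.
   Context: Noncommutative Kleinian fiber product: $\tilde{\mathcal{A}}_{\alpha_1,\alpha_2}(p_1,p_2)$ is generated by $H,X_1^\pm,X_2^\pm$ with relations ($i=1,2$) $HX_i^\pm-X_i^\pm H=\pm\alpha_iX_i^\pm$, $X_i^+X_i^-=p_i(H-\alpha_i/2)$, $X_i^-X_i^+=p_i(H+\alpha_i/2)$, $X_1^+X_2^-=X_2^-X_1^+$, $X_1^-X_2^+=X_2^+X_1^-$; $\mathcal{A}_{\alpha_1,\alpha_2}(p_1,p_2)$ is its quotient by the ideal of all $a$ with $f(H)a=0$ for some nonzero polynomial $f$. It has the anti-involution $\ast$ with $H^\ast=H$, $(X_i^\pm)^\ast=X_i^\mp$, and is $\mathbb{Z}^2$-graded ($\deg H=0$, $\deg X_i^\pm=\pm\mathbf{e}_i$) with degree-zero part $\mathbb{C}[H]$. Configurations: $E_1=\mathbb{Z}^2+(1/2,0)$, $E_2=\mathbb{Z}^2+(0,1/2)$, $E=E_1\cup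 E_2$, $V=\mathbb{Z}^2+(1/2,1/2)$, $\Gamma_{m,n}=\mathbb{Z}(m,n)$. An $(m,n)$-periodic higher spin vertex configuration is $\mathscr{L}:E\to\mathbb{N}$ with $\mathscr{L}(e+(m,n))=\mathscr{L}(e)$, $\mathscr{L}(e+k(-n,m))=0$ for $|k|\gg0$ (each $e$), and $\mathscr{L}(v-(1/2,0))+\mathscr{L}(v-(0,1/2))=\mathscr{L}(v+(1/2,0))+\mathscr{L}(v+(0,1/2))$ ($v\in V$). With $(\alpha_1,\alpha_2)=(-n,m)$: $P_i^{\mathscr{L}}(u)=\prod_{(x_1,x_2)+\Gamma_{m,n}\in E_i/\Gamma_{m,n}}(u-(x_1\alpha_1+x_2\alpha_2))^{\mathscr{L}(x_1,x_2)}$, $\mathcal{A}(\mathscr{L})=\mathcal{A}_{-n,m}(P_1^{\mathscr{L}},P_2^{\mathscr{L}})$. For $e=(x_1,x_2)\in E_i$, $[e]=\{a\in\mathbb{R}^2:a_i=x_i,|a_{3-i}-x_{3-i}|\le1/2\}$; $\mathbb{T}_{m,n}=\mathbb{R}^2/\Gamma_{m,n}$; $\overline{\mathscr{L}}$ is the image of $\bigcup_{\mathscr{L}(e)>0}[e]$ in $\mathbb{T}_{m,n}$. $X(\underline{i})=X_{i_\ell}^+\cdots X_{i_1}^+$. For $\lambda\in\mathbb{Z}$, $\bar\lambda=(x_1,x_2)+\Gamma_{m,n}$ for any $(x_1,x_2)\in\mathbb{Z}^2$ with $-nx_1+mx_2=\lambda$. The based face path $\bar\pi(\underline{i},\lambda)\subset\mathbb{T}_{m,n}$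 is the union of the segments $[\bar\lambda+\mathbf{e}_{i_1}+\cdots+\mathbf{e}_{i_{r-1}},\ \bar\lambda+\mathbf{e}_{i_1}+\cdots+\mathbf{e}_{i_r}]$, $r=1,\dots,\ell$, where $\mathbf{e}_1=(1,0)$, $\mathbf{e}_2=(0,1)$ act by translation on $\mathbb{T}_{m,n}$. *)

theory Defs
  imports "HOL-Analysis.Analysis" "HOL-Computational_Algebra.Polynomial"
begin

datatype gen = GH | GP nat | GM nat
  (* GP i = X_i^+, GM i = X_i^-; only i = 1,2 are used *)

type_synonym fa = "gen list \<Rightarrow> complex"
  (* elements of the free algebra: coefficient functions on words
     (a word [g1,...,gk] stands for the monomial g1 g2 ... gk) *)

definition fa_mult :: "fa \<Rightarrow> fa \<Rightarrow> fa" where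
  "fa_mult a b = (\<lambda>w. \<Sum>k\<le>length w. a (take k w) * b (drop k w))"

definition fa_add :: "fa \<Rightarrow> fa \<Rightarrow> fa" where
  "fa_add a b = (\<lambda>w. a w + b w)"

definition fa_sub :: "fa \<Rightarrow> fa \<Rightarrow> fa" where
  "fa_sub a b = (\<lambda>w. a w - b w)"

definition fa_scale :: "complex \<Rightarrow> fa \<Rightarrow> fa" where
  "fa_scale c a = (\<lambda>w. c * a w)"

definition fa_zero :: fa where
  "fa_zero = (\<lambda>w. 0)"

definition fa_mono :: "gen list \<Rightarrow> fa" where
  "fa_mono u = (\<lambda>w. if w = u then 1 else 0)"

definition poly_H :: "complex poly \<Rightarrow> fa" where
  "poly_H f = (\<lambda>w. if w = replicate (length w) GH then coeff f (length w) else 0)"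

inductive_set fa_ideal :: "fa set \<Rightarrow> fa set" for R :: "fa set" where
  gen: "r \<in> R \<Longrightarrow> r \<in> fa_ideal R"
| zero: "fa_zero \<in> fa_ideal R"
| add: "a \<in> fa_ideal R \<Longrightarrow> b \<in> fa_ideal R \<Longrightarrow> fa_add a b \<in> fa_ideal R"
| scale: "a \<in> fa_ideal R \<Longrightarrow> fa_scale c a \<in> fa_ideal R"
| lmult: "a \<in> fa_ideal R \<Longrightarrow> fa_mult (fa_mono u) a \<in> fa_ideal R"
| rmult: "a \<in> fa_ideal R \<Longrightarrow> fa_mult a (fa_mono u) \<in> fa_ideal R"

text \<open>Defining relations of \<tilde>A_{alpha_1,alpha_2}(p_1,p_2), as elements r (meaning r = 0).\<close>
definition kf_rels :: "(nat \<Rightarrow> complex) \<Rightarrow> (nat \<Rightarrow> complex poly) \<Rightarrow> fa set" where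
  "kf_rels \<alpha> p =
    (\<Union>i\<in>{1,2::nat}.
      { fa_sub (fa_sub (fa_mono [GH, GP i]) (fa_mono [GP i, GH])) (fa_scale (\<alpha> i) (fa_mono [GP i])),
        fa_add (fa_sub (fa_mono [GH, GM i]) (fa_mono [GM i, GH])) (fa_scale (\<alpha> i) (fa_mono [GM i])),
        fa_sub (fa_mono [GP i, GM i]) (poly_H (pcompose (p i) [:- \<alpha> i / 2, 1:])),
        fa_sub (fa_mono [GM i, GP i]) (poly_H (pcompose (p i) [:\<alpha> i / 2, 1:])) })
    \<union> { fa_sub (fa_mono [GP 1, GM 2]) (fa_mono [GM 2, GP 1]),
        fa_sub (fa_mono [GM 1, GP 2]) (fa_mono [GP 2, GM 1]) }"

definition kf_tilde_ideal :: "(nat \<Rightarrow> complex) \<Rightarrow> (nat \<Rightarrow> complex poly) \<Rightarrow> fa set" where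
  "kf_tilde_ideal \<alpha> p = fa_ideal (kf_rels \<alpha> p)"

text \<open>Preimages in the free algebra of the H-torsion elements of \<tilde>A
  (elements a with f(H) a = 0 in \<tilde>A for some nonzero polynomial f).\<close>
definition kf_torsion :: "(nat \<Rightarrow> complex) \<Rightarrow> (nat \<Rightarrow> complex poly) \<Rightarrow> fa set" where
  "kf_torsion \<alpha> p = {a. finite {w. a w \<noteq> 0} \<and>
      (\<exists>f. f \<noteq> 0 \<and> fa_mult (poly_H f) a \<in> kf_tilde_ideal \<alpha> p)}"

text \<open>Kernel of the surjection free algebra \<rightarrow> A_{alpha_1,alpha_2}(p_1,p_2):
  A = \<tilde>A modulo the (ideal generated by the) H-torsion elements.\<close>
definition kf_ideal :: "(nat \<Rightarrow> complex) \<Rightarrow> (nat \<Rightarrow> complex poly) \<Rightarrow> fa set" where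
  "kf_ideal \<alpha> p = fa_ideal (kf_rels \<alpha> p \<union> kf_torsion \<alpha> p)"

fun star_gen :: "gen \<Rightarrow> gen" where
  "star_gen GH = GH" | "star_gen (GP i) = GM i" | "star_gen (GM i) = GP i"

definition star_word :: "gen list \<Rightarrow> gen list" where
  "star_word w = rev (map star_gen w)"

text \<open>X(i) = X_{i_l}^+ ... X_{i_1}^+ as a word.\<close>
definition Xword :: "nat list \<Rightarrow> gen list" where
  "Xword is = rev (map GP is)"

type_synonym pt = "real \<times> real"

definition E1 :: "pt set" where
  "E1 = {(x, y). \<exists>a b :: int. x = of_int a + 1/2 \<and> y = of_int b}"
definition E2 :: "pt set" where
  "E2 = {(x, y). \<exists>a b :: int. x = of_int a \<and> y = of_int b + 1/2}"
definition Eset :: "pt set" where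
  "Eset = E1 \<union> E2"
definition Vset :: "pt set" where
  "Vset = {(x, y). \<exists>a b :: int. x = of_int a + 1/2 \<and> y = of_int b + 1/2}"

definition Ei :: "nat \<Rightarrow> pt set" where
  "Ei i = (if i = 1 then E1 else E2)"

definition periodic_config :: "nat \<Rightarrow> nat \<Rightarrow> (pt \<Rightarrow> nat) \<Rightarrow> bool" where
  "periodic_config m n L \<longleftrightarrow>
     (\<forall>e\<in>Eset. L (e + (real m, real n)) = L e) \<and>
     (\<forall>e\<in>Eset. \<exists>K::int. \<forall>k::int. \<bar>k\<bar> > K \<longrightarrow>
         L (e + (of_int k * - real n, of_int k * real m)) = 0) \<and>
     (\<forall>v\<in>Vset. L (v - (1/2, 0)) + L (v - (0, 1/2)) = L (v + (1/2, 0)) + L (v + (0, 1/2)))"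

text \<open>The class of a point in the torus T_{m,n} = R^2 / Z(m,n).\<close>
definition tcls :: "nat \<Rightarrow> nat \<Rightarrow> pt \<Rightarrow> pt set" where
  "tcls m n p = {q. \<exists>k::int. q = p + (of_int k * real m, of_int k * real n)}"

text \<open>P_i^L(u), with (alpha_1, alpha_2) = (-n, m); product over E_i / Gamma_{m,n}
  (factors with exponent 0 omitted).\<close>
definition P_L :: "nat \<Rightarrow> nat \<Rightarrow> (pt \<Rightarrow> nat) \<Rightarrow> nat \<Rightarrow> complex poly" where
  "P_L m n L i =
     (\<Prod>C\<in>{C \<in> tcls m n ` Ei i. L (SOME e. e \<in> C) > 0}.
        (let e = (SOME e. e \<in> C)
         in [:- complex_of_real (fst e * (- real n) + snd e * real m), 1:] ^ L e))"

definition alphaL :: "nat \<Rightarrow> nat \<Rightarrow> nat \<Rightarrow> complex" where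
  "alphaL m n i = (if i = 1 then - of_nat n else of_nat m)"

definition edge_seg :: "pt \<Rightarrow> pt set" where
  "edge_seg e = (if e \<in> E1 then {(x, y). x = fst e \<and> \<bar>y - snd e\<bar> \<le> 1/2}
                 else {(x, y). y = snd e \<and> \<bar>x - fst e\<bar> \<le> 1/2})"

definition Lbar :: "nat \<Rightarrow> nat \<Rightarrow> (pt \<Rightarrow> nat) \<Rightarrow> pt set set" where
  "Lbar m n L = tcls m n ` (\<Union>e\<in>{e \<in> Eset. L e > 0}. edge_seg e)"

definition unitv :: "nat \<Rightarrow> pt" where
  "unitv i = (if i = 1 then (1, 0) else (0, 1))"

text \<open>A lift of \<bar>lambda: some integer point with -n x_1 + m x_2 = lambda.\<close>
definition lam_lift :: "nat \<Rightarrow> nat \<Rightarrow> int \<Rightarrow> pt" where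
  "lam_lift m n lam = (let (a, b) = (SOME ab :: int \<times> int. - int n * fst ab + int m * snd ab = lam)
                       in (of_int a, of_int b))"

definition psum :: "pt \<Rightarrow> nat list \<Rightarrow> nat \<Rightarrow> pt" where
  "psum p is r = p + (\<Sum>k<r. unitv (is ! k))"

definition face_path :: "nat \<Rightarrow> nat \<Rightarrow> nat list \<Rightarrow> int \<Rightarrow> pt set set" where
  "face_path m n is lam =
     tcls m n ` (\<Union>r\<in>{1..length is}.
        closed_segment (psum (lam_lift m n lam) is (r - 1)) (psum (lam_lift m n lam) is r))"

end

theory Submission
  imports Defs
begin

notation fa_mult (infixl "\<odot>" 70)

lemma fa_mult_Nil[simp]: "(a \<odot> b) [] = a [] * b []"
  by (simp add: fa_mult_def)

lemma fa_mult_Cons: "(a \<odot> b) (x # w) = a [] * b (x # w) + ((\<lambda>u. a (x # u)) \<odot> b) w"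
  unfolding fa_mult_def
  by (simp add: sum.atMost_Suc_shift del: sum.atMost_Suc)

lemma fa_mult_assoc: "(a \<odot> b) \<odot> c = a \<odot> (b \<odot> c)"
proof
  fix w show "((a \<odot> b) \<odot> c) w = (a \<odot> (b \<odot> c)) w"
  proof (induction w arbitrary: a b c)
    case Nil then show ?case by simp
  next
    case (Cons x w)
    have D: "(\<lambda>u. (a \<odot> b) (x # u)) = (\<lambda>u. a [] * b (x # u) + ((\<lambda>u. a (x # u)) \<odot> b) u)"
      by (simp add: fa_mult_Cons)
    have lin: "((\<lambda>u. f u + g u) \<odot> c) w = (f \<odot> c) w + (g \<odot> c) w" for f g :: fa and w
      by (simp add: fa_mult_def distrib_right sum.distrib)
    have lin2: "((\<lambda>u. k * f u) \<odot> c) w = k * (f \<odot> c) w" for f :: fa and k w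
      by (simp add: fa_mult_def sum_distrib_left mult.assoc)
    show ?case
      apply (simp add: fa_mult_Cons D lin)
      apply (subst lin2)
      apply (simp add: Cons.IH algebra_simps)
      done
  qed
qed

definition supp :: "fa \<Rightarrow> gen list set" where "supp a = {w. a w \<noteq> 0}"

definition fsum :: "'s set \<Rightarrow> ('s \<Rightarrow> fa) \<Rightarrow> fa" where
  "fsum S f = (\<lambda>w. \<Sum>s\<in>S. f s w)"

lemma fa_mult_add_left: "fa_add a b \<odot> c = fa_add (a \<odot> c) (b \<odot> c)"
  by (simp add: fa_mult_def fa_add_def distrib_right sum.distrib)
lemma fa_mult_add_right: "c \<odot> fa_add a b = fa_add (c \<odot> a) (c \<odot> b)"
  by (simp add: fa_mult_def fa_add_def distrib_left sum.distrib)
lemma fa_mult_sub_left: "fa_sub a b \<odot> c = fa_sub (a \<odot> c) (b \<odot> c)"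
  by (simp add: fa_mult_def fa_sub_def left_diff_distrib sum_subtractf)
lemma fa_mult_sub_right: "c \<odot> fa_sub a b = fa_sub (c \<odot> a) (c \<odot> b)"
  by (simp add: fa_mult_def fa_sub_def right_diff_distrib sum_subtractf)
lemma fa_mult_scale_left: "fa_scale k a \<odot> c = fa_scale k (a \<odot> c)"
  by (simp add: fa_mult_def fa_scale_def sum_distrib_left mult.assoc)
lemma fa_mult_scale_right: "c \<odot> fa_scale k a = fa_scale k (c \<odot> a)"
  by (simp add: fa_mult_def fa_scale_def sum_distrib_left algebra_simps)
lemma fa_mult_zero_left[simp]: "fa_zero \<odot> c = fa_zero"
  by (simp add: fa_mult_def fa_zero_def)
lemma fa_mult_zero_right[simp]: "c \<odot> fa_zero = fa_zero"
  by (simp add: fa_mult_def fa_zero_def)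
lemma fa_mult_fsum_left: "fsum S f \<odot> c = fsum S (\<lambda>s. f s \<odot> c)"
  unfolding fa_mult_def fsum_def
  by (rule ext) (simp add: sum_distrib_right sum.swap[of _ S])
lemma fa_mult_fsum_right: "c \<odot> fsum S f = fsum S (\<lambda>s. c \<odot> f s)"
  unfolding fa_mult_def fsum_def
  by (rule ext) (simp add: sum_distrib_left sum.swap[of _ S])

lemma mono_mult_left:
  "(fa_mono u \<odot> b) w = (if take (length u) w = u then b (drop (length u) w) else 0)"
proof (induction u arbitrary: w)
  case Nil
  show ?case
  proof (induction w arbitrary: b)
    case Nil then show ?case by (simp add: fa_mono_def)
  next
    case (Cons x w)
    have "(\<lambda>u. fa_mono [] (x # u)) = fa_zero" by (simp add: fa_mono_def fa_zero_def)
    then show ?case unfolding fa_mult_Cons by (simp add: fa_mono_def, simp add: fa_zero_def)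
  qed
next
  case (Cons y u)
  show ?case
  proof (cases w)
    case Nil then show ?thesis by (simp add: fa_mono_def)
  next
    case (Cons x w')
    have e: "(\<lambda>v. fa_mono (y # u) (x # v)) = (if x = y then fa_mono u else fa_zero)"
      by (auto simp: fa_mono_def fa_zero_def)
    show ?thesis
    proof (cases "x = y")
      case True then show ?thesis using Cons.IH[of w'] by (simp add: Cons fa_mult_Cons e fa_mono_def)
    next
      case False then show ?thesis unfolding Cons fa_mult_Cons e
        by (simp add: fa_mono_def, simp add: fa_zero_def)
    qed
  qed
qed

lemma mono_mult_mono: "fa_mono u \<odot> fa_mono v = fa_mono (u @ v)"
proof
  fix w show "(fa_mono u \<odot> fa_mono v) w = fa_mono (u @ v) w"
    unfolding mono_mult_left
    by (auto simp: fa_mono_def) (metis append_take_drop_id)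
qed

lemma mono_Nil_left[simp]: "fa_mono [] \<odot> b = b"
  by (rule ext) (simp add: mono_mult_left)

lemma mono_Nil_right[simp]: "b \<odot> fa_mono [] = b"
proof
  fix w show "(b \<odot> fa_mono []) w = b w"
  proof (induction w arbitrary: b)
    case Nil then show ?case by (simp add: fa_mono_def)
  next
    case (Cons x w) then show ?case by (simp add: fa_mult_Cons fa_mono_def)
  qed
qed

lemma decomp: "finite (supp a) \<Longrightarrow> a = fsum (supp a) (\<lambda>v. fa_scale (a v) (fa_mono v))"
  unfolding fsum_def fa_scale_def fa_mono_def supp_def
  by (rule ext) (auto simp: if_distrib cong: if_cong)

lemma poly_H_decomp: "poly_H f = fsum {..degree f} (\<lambda>k. fa_scale (coeff f k) (fa_mono (replicate k GH)))"
proof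
  fix w
  show "poly_H f w = fsum {..degree f} (\<lambda>k. fa_scale (coeff f k) (fa_mono (replicate k GH))) w"
  proof (cases "w = replicate (length w) GH")
    case True
    have "fsum {..degree f} (\<lambda>k. fa_scale (coeff f k) (fa_mono (replicate k GH))) w
         = (\<Sum>k\<in>{..degree f}. if k = length w then coeff f k else 0)"
    proof -
      have eq: "\<And>k. (w = replicate k GH) = (k = length w)" using True by (metis length_replicate)
      have s: "(\<Sum>s\<le>degree f. coeff f s * (if s = length w then 1 else 0)) = (\<Sum>s\<le>degree f. if s = length w then coeff f s else 0)"
        by (rule sum.cong) auto
      show ?thesis unfolding fsum_def fa_scale_def fa_mono_def by (simp add: eq s)
    qed
    also have "\<dots> = coeff f (length w)"
      by (auto simp: coeff_eq_0)
    finally show ?thesis using True by (simp add: poly_H_def)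
  next
    case False
    then show ?thesis unfolding fsum_def fa_scale_def fa_mono_def poly_H_def
      by (auto intro!: sum.neutral)
  qed
qed

lemma poly_H_mult: "poly_H f \<odot> poly_H g = poly_H (f * g)"
proof
  fix w
  show "(poly_H f \<odot> poly_H g) w = poly_H (f * g) w"
  proof (cases "w = replicate (length w) GH")
    case True
    define n where "n = length w"
    have w: "w = replicate n GH" using True n_def by simp
    show ?thesis
      unfolding fa_mult_def poly_H_def w
      by (simp add: coeff_mult min_def take_replicate drop_replicate)
  next
    case False
    have "poly_H f (take k w) * poly_H g (drop k w) = 0" for k
    proof (rule ccontr)
      assume "poly_H f (take k w) * poly_H g (drop k w) \<noteq> 0"
      then have "take k w = replicate (length (take k w)) GH" "drop k w = replicate (length (drop k w)) GH"
        by (auto simp: poly_H_def split: if_splits)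
      then have "w = replicate (length (take k w)) GH @ replicate (length (drop k w)) GH"
        by (metis append_take_drop_id)
      then have "w = replicate (length w) GH" by (metis length_replicate replicate_add length_append)
      then show False using False by simp
    qed
    then have "(poly_H f \<odot> poly_H g) w = 0" unfolding fa_mult_def by (simp only: sum.neutral_const)
    then show ?thesis using False by (simp add: poly_H_def)
  qed
qed

lemma poly_H_add: "poly_H (f + g) = fa_add (poly_H f) (poly_H g)"
  by (rule ext) (simp add: poly_H_def fa_add_def)
lemma poly_H_smult: "poly_H (smult c f) = fa_scale c (poly_H f)"
  by (rule ext) (simp add: poly_H_def fa_scale_def)
lemma poly_H_sum: "poly_H (\<Sum>s\<in>S. f s) = fsum S (\<lambda>s. poly_H (f s))"
  by (rule ext) (auto simp: poly_H_def fsum_def coeff_sum)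
lemma poly_H_one: "poly_H 1 = fa_mono []"
  by (rule ext) (auto simp: poly_H_def fa_mono_def)
lemma poly_H_X: "poly_H [:0,1:] = fa_mono [GH]"
proof
  fix w show "poly_H [:0, 1:] w = fa_mono [GH] w"
    by (cases w rule: rev_cases) (auto simp: poly_H_def fa_mono_def coeff_pCons split: nat.split)
qed

lemma fa_sub_as: "fa_sub a b = fa_add a (fa_scale (-1) b)"
  by (rule ext) (simp add: fa_sub_def fa_add_def fa_scale_def)

lemma I_sub: "a \<in> fa_ideal R \<Longrightarrow> b \<in> fa_ideal R \<Longrightarrow> fa_sub a b \<in> fa_ideal R"
  unfolding fa_sub_as by (intro fa_ideal.add fa_ideal.scale)

lemma fsum_empty[simp]: "fsum {} f = fa_zero"
  by (simp add: fsum_def fa_zero_def)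
lemma fsum_insert: "finite S \<Longrightarrow> s \<notin> S \<Longrightarrow> fsum (insert s S) f = fa_add (f s) (fsum S f)"
  by (rule ext) (simp add: fsum_def fa_add_def)

lemma I_fsum: "finite S \<Longrightarrow> (\<And>s. s \<in> S \<Longrightarrow> f s \<in> fa_ideal R) \<Longrightarrow> fsum S f \<in> fa_ideal R"
proof (induction S rule: finite_induct)
  case empty then show ?case by (simp add: fa_ideal.zero)
next
  case (insert x F) then show ?case by (simp add: fsum_insert fa_ideal.add)
qed

lemma I_lmult: assumes "finite (supp b)" "a \<in> fa_ideal R" shows "b \<odot> a \<in> fa_ideal R"
proof -
  have "b \<odot> a = fsum (supp b) (\<lambda>v. fa_scale (b v) (fa_mono v)) \<odot> a"
    using decomp[OF assms(1)] by simp
  also have "\<dots> = fsum (supp b) (\<lambda>v. fa_scale (b v) (fa_mono v \<odot> a))"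
    by (simp add: fa_mult_fsum_left fa_mult_scale_left)
  finally show ?thesis using assms by (auto intro!: I_fsum fa_ideal.scale fa_ideal.lmult)
qed

lemma I_rmult: assumes "finite (supp b)" "a \<in> fa_ideal R" shows "a \<odot> b \<in> fa_ideal R"
proof -
  have "a \<odot> b = a \<odot> fsum (supp b) (\<lambda>v. fa_scale (b v) (fa_mono v))"
    using decomp[OF assms(1)] by simp
  also have "\<dots> = fsum (supp b) (\<lambda>v. fa_scale (b v) (a \<odot> fa_mono v))"
    by (simp add: fa_mult_fsum_right fa_mult_scale_right)
  finally show ?thesis using assms by (auto intro!: I_fsum fa_ideal.scale fa_ideal.rmult)
qed

lemma fa_ideal_mono: assumes "R \<subseteq> R'" "a \<in> fa_ideal R" shows "a \<in> fa_ideal R'"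
  using assms(2) by (induction rule: fa_ideal.induct) (use assms(1) in \<open>auto intro: fa_ideal.intros\<close>)

lemma supp_mono: "finite (supp (fa_mono u))"
  by (rule finite_subset[of _ "{u}"]) (auto simp: supp_def fa_mono_def)
lemma supp_scale: "finite (supp a) \<Longrightarrow> finite (supp (fa_scale c a))"
  by (rule finite_subset[of _ "supp a"]) (auto simp: supp_def fa_scale_def)
lemma supp_add: "finite (supp a) \<Longrightarrow> finite (supp b) \<Longrightarrow> finite (supp (fa_add a b))"
  by (rule finite_subset[of _ "supp a \<union> supp b"]) (auto simp: supp_def fa_add_def)
lemma supp_sub: "finite (supp a) \<Longrightarrow> finite (supp b) \<Longrightarrow> finite (supp (fa_sub a b))"
  by (rule finite_subset[of _ "supp a \<union> supp b"]) (auto simp: supp_def fa_sub_def)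
lemma supp_zero: "finite (supp fa_zero)"
  by (simp add: supp_def fa_zero_def)
lemma supp_fsum: "finite S \<Longrightarrow> (\<And>s. s \<in> S \<Longrightarrow> finite (supp (f s))) \<Longrightarrow> finite (supp (fsum S f))"
proof (induction S rule: finite_induct)
  case empty then show ?case by (simp add: supp_zero)
next
  case (insert x F) then show ?case by (simp add: fsum_insert supp_add)
qed
lemma supp_poly_H: "finite (supp (poly_H f))"
  by (subst poly_H_decomp) (auto intro!: supp_fsum supp_scale supp_mono)
lemma supp_mult: assumes "finite (supp a)" "finite (supp b)" shows "finite (supp (a \<odot> b))"
proof (rule finite_subset[of _ "(\<lambda>(u,v). u @ v) ` (supp a \<times> supp b)"])
  show "supp (a \<odot> b) \<subseteq> (\<lambda>(u,v). u @ v) ` (supp a \<times> supp b)"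
  proof
    fix w assume "w \<in> supp (a \<odot> b)"
    then have "(\<Sum>k\<le>length w. a (take k w) * b (drop k w)) \<noteq> 0" by (simp add: supp_def fa_mult_def)
    then obtain k where "a (take k w) * b (drop k w) \<noteq> 0" by (meson sum.neutral)
    then show "w \<in> (\<lambda>(u,v). u @ v) ` (supp a \<times> supp b)"
      by (auto simp: supp_def intro!: image_eqI[of _ _ "(take k w, drop k w)"])
  qed
qed (use assms in auto)

definition fcong :: "fa set \<Rightarrow> fa \<Rightarrow> fa \<Rightarrow> bool" where
  "fcong R a b \<longleftrightarrow> fa_sub a b \<in> fa_ideal R"

lemma fcong_refl: "fcong R a a"
proof -
  have "fa_sub a a = fa_zero" by (rule ext) (simp add: fa_sub_def fa_zero_def)
  then show ?thesis by (simp add: fcong_def fa_ideal.zero)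
qed
lemma fcong_eq: "a = b \<Longrightarrow> fcong R a b" using fcong_refl by simp
lemma fcong_sym: "fcong R a b \<Longrightarrow> fcong R b a"
proof -
  have "fa_sub b a = fa_scale (-1) (fa_sub a b)" by (rule ext) (simp add: fa_sub_def fa_scale_def)
  then show "fcong R a b \<Longrightarrow> fcong R b a" by (simp add: fcong_def fa_ideal.scale)
qed
lemma fcong_trans: "fcong R a b \<Longrightarrow> fcong R b c \<Longrightarrow> fcong R a c"
proof -
  have "fa_sub a c = fa_add (fa_sub a b) (fa_sub b c)" by (rule ext) (simp add: fa_sub_def fa_add_def)
  then show "fcong R a b \<Longrightarrow> fcong R b c \<Longrightarrow> fcong R a c" by (simp add: fcong_def fa_ideal.add)
qed
lemma fcong_add: "fcong R a a' \<Longrightarrow> fcong R b b' \<Longrightarrow> fcong R (fa_add a b) (fa_add a' b')"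
proof -
  have "fa_sub (fa_add a b) (fa_add a' b') = fa_add (fa_sub a a') (fa_sub b b')"
    by (rule ext) (simp add: fa_sub_def fa_add_def)
  then show "fcong R a a' \<Longrightarrow> fcong R b b' \<Longrightarrow> fcong R (fa_add a b) (fa_add a' b')"
    by (simp add: fcong_def fa_ideal.add)
qed
lemma fcong_scale: "fcong R a a' \<Longrightarrow> fcong R (fa_scale c a) (fa_scale c a')"
proof -
  have "fa_sub (fa_scale c a) (fa_scale c a') = fa_scale c (fa_sub a a')"
    by (rule ext) (simp add: fa_sub_def fa_scale_def algebra_simps)
  then show "fcong R a a' \<Longrightarrow> fcong R (fa_scale c a) (fa_scale c a')"
    by (simp add: fcong_def fa_ideal.scale)
qed
lemma fcong_lmult: "finite (supp c) \<Longrightarrow> fcong R a b \<Longrightarrow> fcong R (c \<odot> a) (c \<odot> b)"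
  unfolding fcong_def by (simp add: fa_mult_sub_right[symmetric] I_lmult)
lemma fcong_rmult: "finite (supp c) \<Longrightarrow> fcong R a b \<Longrightarrow> fcong R (a \<odot> c) (b \<odot> c)"
  unfolding fcong_def by (simp add: fa_mult_sub_left[symmetric] I_rmult)
lemma fcong_fsum: "finite S \<Longrightarrow> (\<And>s. s \<in> S \<Longrightarrow> fcong R (f s) (g s)) \<Longrightarrow> fcong R (fsum S f) (fsum S g)"
proof (induction S rule: finite_induct)
  case empty then show ?case by (simp add: fcong_refl)
next
  case (insert x F) then show ?case by (simp add: fsum_insert fcong_add)
qed

lemma pcompose_expand: "pcompose h (q::complex poly) = (\<Sum>k\<le>degree h. smult (coeff h k) (q ^ k))"
proof -
  have "poly (pcompose h q) = poly (\<Sum>k\<le>degree h. smult (coeff h k) (q ^ k))"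
    by (rule ext) (simp add: poly_pcompose poly_altdef[of h] poly_sum poly_power)
  then show ?thesis by (simp add: poly_eq_poly_eq_iff)
qed

section \<open>Derivation in the algebra\<close>

lemma fa_add_commute: "fa_add a b = fa_add b a"
  by (rule ext) (simp add: fa_add_def)

lemma rel_in: "r \<in> R \<Longrightarrow> r \<in> fa_ideal R" by (rule fa_ideal.gen)

lemma rel_MH:
  assumes "i \<in> {1,2}"
  shows "fcong (kf_rels \<alpha> p) (fa_mono [GM i, GH]) (fa_add (fa_mono [GH, GM i]) (fa_scale (\<alpha> i) (fa_mono [GM i])))"
proof -
  let ?r = "fa_add (fa_sub (fa_mono [GH, GM i]) (fa_mono [GM i, GH])) (fa_scale (\<alpha> i) (fa_mono [GM i]))"
  have "?r \<in> kf_rels \<alpha> p" using assms unfolding kf_rels_def by blast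
  then have "fa_scale (-1) ?r \<in> fa_ideal (kf_rels \<alpha> p)" by (intro fa_ideal.scale fa_ideal.gen)
  moreover have "fa_scale (-1) ?r = fa_sub (fa_mono [GM i, GH]) (fa_add (fa_mono [GH, GM i]) (fa_scale (\<alpha> i) (fa_mono [GM i])))"
    by (rule ext) (simp add: fa_sub_def fa_add_def fa_scale_def)
  ultimately show ?thesis by (simp add: fcong_def)
qed

lemma rel_MP:
  assumes "i \<in> {1,2}"
  shows "fcong (kf_rels \<alpha> p) (fa_mono [GM i, GP i]) (poly_H (pcompose (p i) [:\<alpha> i / 2, 1:]))"
proof -
  have "fa_sub (fa_mono [GM i, GP i]) (poly_H (pcompose (p i) [:\<alpha> i / 2, 1:])) \<in> kf_rels \<alpha> p"
    using assms unfolding kf_rels_def by blast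
  then show ?thesis by (simp add: fcong_def fa_ideal.gen)
qed

lemma K0:
  assumes "i \<in> {1,2}"
  shows "fcong (kf_rels \<alpha> p) (fa_mono [GM i] \<odot> fa_mono (replicate k GH))
           (poly_H ([:\<alpha> i, 1:] ^ k) \<odot> fa_mono [GM i])"
proof (induction k)
  case 0 then show ?case by (simp add: poly_H_one fcong_refl)
next
  case (Suc k)
  let ?R = "kf_rels \<alpha> p" and ?q = "[:\<alpha> i, 1:]"
  have s1: "fa_mono [GM i] \<odot> fa_mono (replicate (Suc k) GH) = (fa_mono [GM i] \<odot> fa_mono (replicate k GH)) \<odot> fa_mono [GH]"
    by (simp add: fa_mult_assoc mono_mult_mono replicate_append_same)
  have s2: "fcong ?R ((fa_mono [GM i] \<odot> fa_mono (replicate k GH)) \<odot> fa_mono [GH])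
        ((poly_H (?q ^ k) \<odot> fa_mono [GM i]) \<odot> fa_mono [GH])"
    by (rule fcong_rmult[OF supp_mono Suc.IH])
  have s3: "(poly_H (?q ^ k) \<odot> fa_mono [GM i]) \<odot> fa_mono [GH] = poly_H (?q ^ k) \<odot> fa_mono [GM i, GH]"
    by (simp add: fa_mult_assoc mono_mult_mono)
  have s4: "fcong ?R (poly_H (?q ^ k) \<odot> fa_mono [GM i, GH])
      (poly_H (?q ^ k) \<odot> fa_add (fa_mono [GH, GM i]) (fa_scale (\<alpha> i) (fa_mono [GM i])))"
    by (rule fcong_lmult[OF supp_poly_H rel_MH[OF assms]])
  have s5: "poly_H (?q ^ k) \<odot> fa_add (fa_mono [GH, GM i]) (fa_scale (\<alpha> i) (fa_mono [GM i]))
      = poly_H (?q ^ Suc k) \<odot> fa_mono [GM i]"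
  proof -
    have e1a: "poly_H (?q ^ k) \<odot> fa_mono [GH, GM i] = poly_H (?q ^ k * [:0,1:]) \<odot> fa_mono [GM i]"
    proof -
      have "poly_H (?q ^ k * [:0,1:]) \<odot> fa_mono [GM i] = (poly_H (?q ^ k) \<odot> poly_H [:0,1:]) \<odot> fa_mono [GM i]"
        by (simp only: poly_H_mult)
      also have "\<dots> = poly_H (?q ^ k) \<odot> fa_mono [GH, GM i]"
        by (simp only: poly_H_X fa_mult_assoc mono_mult_mono append.simps)
      finally show ?thesis by simp
    qed
    have e1b: "?q ^ Suc k = ?q ^ k * [:0,1:] + smult (\<alpha> i) (?q ^ k)"
      by (simp add: algebra_simps)
    have "poly_H (?q ^ k) \<odot> fa_add (fa_mono [GH, GM i]) (fa_scale (\<alpha> i) (fa_mono [GM i]))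
        = fa_add (poly_H (?q ^ k) \<odot> fa_mono [GH, GM i]) (fa_scale (\<alpha> i) (poly_H (?q ^ k) \<odot> fa_mono [GM i]))"
      by (simp only: fa_mult_add_right fa_mult_scale_right)
    also have "\<dots> = fa_add (poly_H (?q ^ k * [:0,1:]) \<odot> fa_mono [GM i]) (poly_H (smult (\<alpha> i) (?q ^ k)) \<odot> fa_mono [GM i])"
      by (simp only: e1a poly_H_smult fa_mult_scale_left)
    also have "\<dots> = poly_H (?q ^ k * [:0,1:] + smult (\<alpha> i) (?q ^ k)) \<odot> fa_mono [GM i]"
      by (simp only: poly_H_add fa_mult_add_left)
    also have "\<dots> = poly_H (?q ^ Suc k) \<odot> fa_mono [GM i]"
      by (simp only: e1b)
    finally show ?thesis .
  qed
  have "fcong ?R ((fa_mono [GM i] \<odot> fa_mono (replicate k GH)) \<odot> fa_mono [GH])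
      (poly_H (?q ^ k) \<odot> fa_add (fa_mono [GH, GM i]) (fa_scale (\<alpha> i) (fa_mono [GM i])))"
    using fcong_trans[OF s2, of "poly_H (?q ^ k) \<odot> fa_add (fa_mono [GH, GM i]) (fa_scale (\<alpha> i) (fa_mono [GM i]))"] s4
    unfolding s3 by blast
  then show ?case unfolding s1 s5 .
qed

lemma K:
  assumes "i \<in> {1,2}"
  shows "fcong (kf_rels \<alpha> p) (fa_mono [GM i] \<odot> poly_H h)
           (poly_H (pcompose h [:\<alpha> i, 1:]) \<odot> fa_mono [GM i])"
proof -
  let ?R = "kf_rels \<alpha> p" and ?q = "[:\<alpha> i, 1:]"
  have a: "fa_mono [GM i] \<odot> poly_H h
      = fsum {..degree h} (\<lambda>k. fa_scale (coeff h k) (fa_mono [GM i] \<odot> fa_mono (replicate k GH)))"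
    by (subst poly_H_decomp) (simp only: fa_mult_fsum_right fa_mult_scale_right)
  have b: "poly_H (pcompose h ?q) \<odot> fa_mono [GM i]
      = fsum {..degree h} (\<lambda>k. fa_scale (coeff h k) (poly_H (?q ^ k) \<odot> fa_mono [GM i]))"
    by (simp only: pcompose_expand poly_H_sum poly_H_smult fa_mult_fsum_left fa_mult_scale_left)
  show ?thesis unfolding a b
    by (intro fcong_fsum fcong_scale K0[OF assms]) simp
qed

fun Tpoly :: "(nat \<Rightarrow> complex) \<Rightarrow> (nat \<Rightarrow> complex poly) \<Rightarrow> nat list \<Rightarrow> complex poly" where
  "Tpoly \<alpha> p [] = 1"
| "Tpoly \<alpha> p (i # is) = pcompose (Tpoly \<alpha> p is) [:\<alpha> i, 1:] * pcompose (p i) [:\<alpha> i / 2, 1:]"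

lemma word_Cons: "star_word (Xword (i # is)) @ Xword (i # is) = GM i # (star_word (Xword is) @ Xword is) @ [GP i]"
  by (simp add: star_word_def Xword_def)

lemma D:
  assumes "set is \<subseteq> {1,2}"
  shows "fcong (kf_rels \<alpha> p) (fa_mono (star_word (Xword is) @ Xword is)) (poly_H (Tpoly \<alpha> p is))"
  using assms
proof (induction "is")
  case Nil then show ?case by (simp add: star_word_def Xword_def poly_H_one fcong_refl)
next
  case (Cons i "is")
  let ?R = "kf_rels \<alpha> p" and ?v = "star_word (Xword is) @ Xword is"
  let ?T = "Tpoly \<alpha> p is"
  have i: "i \<in> {1,2}" and IH: "fcong ?R (fa_mono ?v) (poly_H ?T)" using Cons by auto
  have e1: "fa_mono (star_word (Xword (i # is)) @ Xword (i # is)) = (fa_mono [GM i] \<odot> fa_mono ?v) \<odot> fa_mono [GP i]"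
    by (simp only: word_Cons mono_mult_mono append.simps)
  have c1: "fcong ?R ((fa_mono [GM i] \<odot> fa_mono ?v) \<odot> fa_mono [GP i]) ((fa_mono [GM i] \<odot> poly_H ?T) \<odot> fa_mono [GP i])"
    by (intro fcong_rmult fcong_lmult supp_mono IH)
  have c2: "fcong ?R ((fa_mono [GM i] \<odot> poly_H ?T) \<odot> fa_mono [GP i])
              ((poly_H (pcompose ?T [:\<alpha> i, 1:]) \<odot> fa_mono [GM i]) \<odot> fa_mono [GP i])"
    by (intro fcong_rmult supp_mono K i)
  have e2: "(poly_H (pcompose ?T [:\<alpha> i, 1:]) \<odot> fa_mono [GM i]) \<odot> fa_mono [GP i]
       = poly_H (pcompose ?T [:\<alpha> i, 1:]) \<odot> fa_mono [GM i, GP i]"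
    by (simp only: fa_mult_assoc mono_mult_mono append.simps)
  have c3: "fcong ?R (poly_H (pcompose ?T [:\<alpha> i, 1:]) \<odot> fa_mono [GM i, GP i])
      (poly_H (pcompose ?T [:\<alpha> i, 1:]) \<odot> poly_H (pcompose (p i) [:\<alpha> i / 2, 1:]))"
    by (intro fcong_lmult supp_poly_H rel_MP i)
  have e3: "poly_H (pcompose ?T [:\<alpha> i, 1:]) \<odot> poly_H (pcompose (p i) [:\<alpha> i / 2, 1:]) = poly_H (Tpoly \<alpha> p (i # is))"
    by (simp only: poly_H_mult Tpoly.simps)
  show ?case unfolding e1 e3[symmetric]
    by (rule fcong_trans[OF fcong_trans[OF c1 c2]]) (simp only: e2 c3)
qed

type_synonym W = "int \<times> int \<Rightarrow> complex poly"

definition sh :: "complex \<Rightarrow> complex poly \<Rightarrow> complex poly" where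
  "sh c s = pcompose s [:- c, 1:]"

lemma sh_mult: "sh c (f * g) = sh c f * sh c g" by (simp add: sh_def pcompose_mult)
lemma sh_add: "sh c (f + g) = sh c f + sh c g" by (simp add: sh_def pcompose_add)
lemma sh_smult: "sh c (smult k f) = smult k (sh c f)" by (simp add: sh_def pcompose_smult)
lemma sh_sum: "sh c (\<Sum>s\<in>S. f s) = (\<Sum>s\<in>S. sh c (f s))" by (simp add: sh_def pcompose_sum)
lemma sh_X: "sh c [:0,1:] = [:- c, 1:]" by (simp add: sh_def pcompose_pCons)
lemma sh_pCons0: "sh c (pCons 0 y) = pCons 0 (sh c y) - smult c (sh c y)"
  by (simp add: sh_def pcompose_pCons)
lemma sh_sh: "sh c (sh d f) = sh (c + d) f"
  by (simp add: sh_def pcompose_assoc[symmetric] pcompose_pCons algebra_simps)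
lemma sh_0[simp]: "sh 0 f = f" by (simp add: sh_def)
lemma sh_one[simp]: "sh c 1 = 1" by (simp add: sh_def pcompose_1)
lemma sh_zero[simp]: "sh c 0 = 0" by (simp add: sh_def)

lemma smult_sum_right: "smult k (\<Sum>s\<in>S. f s) = (\<Sum>s\<in>S. smult k (f s))"
  by (induct S rule: infinite_finite_induct) (auto simp: smult_add_right)

definition mv :: "nat \<Rightarrow> int \<Rightarrow> int \<times> int \<Rightarrow> int \<times> int" where
  "mv i s e = (if i = 1 then (fst e + s, snd e) else (fst e, snd e + s))"

lemma mv_inv1[simp]: "mv i 1 (mv i (-1) e) = e" by (simp add: mv_def)
lemma mv_inv2[simp]: "mv i (-1) (mv i 1 e) = e" by (simp add: mv_def)
lemma mv12: "mv (Suc 0) s (mv 2 t e) = mv 2 t (mv (Suc 0) s e)" by (auto simp: mv_def)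
lemma mv_comm: "mv i s (mv j t e) = mv j t (mv i s e)" by (auto simp: mv_def)

fun phg :: "(nat \<Rightarrow> complex) \<Rightarrow> (nat \<Rightarrow> complex poly) \<Rightarrow> (nat \<Rightarrow> complex poly) \<Rightarrow> gen \<Rightarrow> W \<Rightarrow> W" where
  "phg \<alpha> a b GH \<psi> = (\<lambda>e. [:0,1:] * \<psi> e)"
| "phg \<alpha> a b (GP i) \<psi> = (\<lambda>e. a i * sh (\<alpha> i) (\<psi> (mv i (-1) e)))"
| "phg \<alpha> a b (GM i) \<psi> = (\<lambda>e. b i * sh (- \<alpha> i) (\<psi> (mv i 1 e)))"

fun phw :: "(nat \<Rightarrow> complex) \<Rightarrow> (nat \<Rightarrow> complex poly) \<Rightarrow> (nat \<Rightarrow> complex poly) \<Rightarrow> gen list \<Rightarrow> W \<Rightarrow> W" where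
  "phw \<alpha> a b [] \<psi> = \<psi>"
| "phw \<alpha> a b (g # w) \<psi> = phg \<alpha> a b g (phw \<alpha> a b w \<psi>)"

lemma phw_append: "phw \<alpha> a b (u @ v) \<psi> = phw \<alpha> a b u (phw \<alpha> a b v \<psi>)"
  by (induction u) auto

lemma phg_lin: "phg \<alpha> a b g (\<lambda>e. \<Sum>s\<in>S. smult (c s) (\<psi>s s e)) = (\<lambda>e. \<Sum>s\<in>S. smult (c s) (phg \<alpha> a b g (\<psi>s s) e))"
  by (cases g) (auto simp: sum_distrib_left sh_sum sh_smult)

lemma phw_lin: "phw \<alpha> a b w (\<lambda>e. \<Sum>s\<in>S. smult (c s) (\<psi>s s e)) = (\<lambda>e. \<Sum>s\<in>S. smult (c s) (phw \<alpha> a b w (\<psi>s s) e))"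
  by (induction w) (auto simp: phg_lin)

definition Phi :: "(nat \<Rightarrow> complex) \<Rightarrow> (nat \<Rightarrow> complex poly) \<Rightarrow> (nat \<Rightarrow> complex poly) \<Rightarrow> fa \<Rightarrow> W \<Rightarrow> W" where
  "Phi \<alpha> a b x \<psi> e = (\<Sum>w\<in>supp x. smult (x w) (phw \<alpha> a b w \<psi> e))"

lemma Phi_gen: "finite S \<Longrightarrow> supp x \<subseteq> S \<Longrightarrow> Phi \<alpha> a b x \<psi> e = (\<Sum>w\<in>S. smult (x w) (phw \<alpha> a b w \<psi> e))"
  unfolding Phi_def by (rule sum.mono_neutral_left) (auto simp: supp_def)

lemma Phi_add: "finite (supp x) \<Longrightarrow> finite (supp y) \<Longrightarrow> Phi \<alpha> a b (fa_add x y) \<psi> e = Phi \<alpha> a b x \<psi> e + Phi \<alpha> a b y \<psi> e"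
  apply (subst (1 2 3) Phi_gen[of "supp x \<union> supp y"])
  apply (auto simp: supp_def fa_add_def smult_add_left sum.distrib)
  done

lemma Phi_sub: "finite (supp x) \<Longrightarrow> finite (supp y) \<Longrightarrow> Phi \<alpha> a b (fa_sub x y) \<psi> e = Phi \<alpha> a b x \<psi> e - Phi \<alpha> a b y \<psi> e"
  apply (subst (1 2 3) Phi_gen[of "supp x \<union> supp y"])
  apply (auto simp: supp_def fa_sub_def smult_diff_left sum_subtractf)
  done

lemma Phi_scale: "finite (supp x) \<Longrightarrow> Phi \<alpha> a b (fa_scale k x) \<psi> e = smult k (Phi \<alpha> a b x \<psi> e)"
  apply (subst (1 2) Phi_gen[of "supp x"])
  apply (auto simp: supp_def fa_scale_def smult_sum_right)
  done

lemma Phi_zero: "Phi \<alpha> a b fa_zero \<psi> e = 0"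
  by (simp add: Phi_def supp_def fa_zero_def)

lemma Phi_fsum: "finite S \<Longrightarrow> (\<And>s. s \<in> S \<Longrightarrow> finite (supp (f s))) \<Longrightarrow>
   Phi \<alpha> a b (fsum S f) \<psi> e = (\<Sum>s\<in>S. Phi \<alpha> a b (f s) \<psi> e)"
proof (induction S rule: finite_induct)
  case empty then show ?case by (simp add: Phi_zero)
next
  case (insert x F) then show ?case by (simp add: fsum_insert Phi_add supp_fsum)
qed

lemma Phi_mono: "Phi \<alpha> a b (fa_mono u) \<psi> e = phw \<alpha> a b u \<psi> e"
  by (subst Phi_gen[of "{u}"]) (auto simp: supp_def fa_mono_def)

lemma Phi_lmono: assumes "finite (supp x)"
  shows "Phi \<alpha> a b (fa_mono u \<odot> x) \<psi> = phw \<alpha> a b u (Phi \<alpha> a b x \<psi>)"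
proof
  fix e
  have "fa_mono u \<odot> x = fsum (supp x) (\<lambda>v. fa_scale (x v) (fa_mono (u @ v)))"
    by (subst decomp[OF assms]) (simp add: fa_mult_fsum_right fa_mult_scale_right mono_mult_mono)
  then have "Phi \<alpha> a b (fa_mono u \<odot> x) \<psi> e = (\<Sum>v\<in>supp x. smult (x v) (phw \<alpha> a b (u @ v) \<psi> e))"
    using assms by (simp add: Phi_fsum supp_scale supp_mono Phi_scale Phi_mono)
  also have "\<dots> = phw \<alpha> a b u (Phi \<alpha> a b x \<psi>) e"
    unfolding Phi_def phw_append by (simp add: phw_lin)
  finally show "Phi \<alpha> a b (fa_mono u \<odot> x) \<psi> e = phw \<alpha> a b u (Phi \<alpha> a b x \<psi>) e" .
qed

lemma Phi_rmono: assumes "finite (supp x)"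
  shows "Phi \<alpha> a b (x \<odot> fa_mono u) \<psi> = Phi \<alpha> a b x (phw \<alpha> a b u \<psi>)"
proof
  fix e
  have "x \<odot> fa_mono u = fsum (supp x) (\<lambda>v. fa_scale (x v) (fa_mono (v @ u)))"
    by (subst decomp[OF assms]) (simp add: fa_mult_fsum_left fa_mult_scale_left mono_mult_mono)
  then have "Phi \<alpha> a b (x \<odot> fa_mono u) \<psi> e = (\<Sum>v\<in>supp x. smult (x v) (phw \<alpha> a b (v @ u) \<psi> e))"
    using assms by (simp add: Phi_fsum supp_scale supp_mono Phi_scale Phi_mono)
  then show "Phi \<alpha> a b (x \<odot> fa_mono u) \<psi> e = Phi \<alpha> a b x (phw \<alpha> a b u \<psi>) e"
    by (simp add: phw_append Phi_def)
qed

lemma phw_rep: "phw \<alpha> a b (replicate k GH) \<psi> = (\<lambda>e. [:0,1:] ^ k * \<psi> e)"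
  by (induction k) (auto simp: mult.assoc)

lemma Phi_polyH: assumes "finite (supp x)"
  shows "Phi \<alpha> a b (poly_H f \<odot> x) \<psi> e = f * Phi \<alpha> a b x \<psi> e"
proof -
  have "poly_H f \<odot> x = fsum {..degree f} (\<lambda>k. fa_scale (coeff f k) (fa_mono (replicate k GH) \<odot> x))"
    by (subst poly_H_decomp) (simp add: fa_mult_fsum_left fa_mult_scale_left)
  then have "Phi \<alpha> a b (poly_H f \<odot> x) \<psi> e = (\<Sum>k\<le>degree f. smult (coeff f k) ([:0,1:] ^ k * Phi \<alpha> a b x \<psi> e))"
    using assms by (simp add: Phi_fsum supp_scale supp_mono supp_mult Phi_scale Phi_lmono phw_rep)
  also have "\<dots> = (\<Sum>k\<le>degree f. monom (coeff f k) k) * Phi \<alpha> a b x \<psi> e"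
    by (simp add: monom_altdef sum_distrib_right)
  finally show ?thesis by (simp add: poly_as_sum_of_monoms)
qed

lemma Phi_polyH': "Phi \<alpha> a b (poly_H f) \<psi> e = f * \<psi> e"
  using Phi_polyH[of "fa_mono []" \<alpha> a b f \<psi> e] by (simp add: supp_mono Phi_mono)

lemma phw_zero: "phw \<alpha> a b u (\<lambda>e. 0) = (\<lambda>e. 0)"
proof (induction u)
  case (Cons g u) then show ?case by (cases g) auto
qed simp

lemma Phi_kill_ideal:
  assumes "\<And>r. r \<in> R \<Longrightarrow> finite (supp r) \<and> (\<forall>\<psi> e. Phi \<alpha> a b r \<psi> e = 0)"
    and "x \<in> fa_ideal R"
  shows "finite (supp x) \<and> (\<forall>\<psi> e. Phi \<alpha> a b x \<psi> e = 0)"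
  using assms(2)
proof (induction rule: fa_ideal.induct)
  case (gen r) then show ?case using assms(1) by blast
next
  case zero then show ?case by (simp add: supp_zero Phi_zero)
next
  case (add x y) then show ?case by (simp add: supp_add Phi_add)
next
  case (scale x c) then show ?case by (simp add: supp_scale Phi_scale)
next
  case (lmult x u)
  then have "\<And>\<psi>. Phi \<alpha> a b x \<psi> = (\<lambda>e. 0)" by auto
  with lmult show ?case by (simp add: supp_mult supp_mono Phi_lmono phw_zero)
next
  case (rmult x u) then show ?case by (simp add: supp_mult supp_mono Phi_rmono)
qed

definition cond :: "(nat \<Rightarrow> complex) \<Rightarrow> (nat \<Rightarrow> complex poly) \<Rightarrow> (nat \<Rightarrow> complex poly) \<Rightarrow> (nat \<Rightarrow> complex poly) \<Rightarrow> bool" where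
  "cond \<alpha> a b p \<longleftrightarrow>
     (\<forall>i\<in>{1,2}. a i * sh (\<alpha> i) (b i) = pcompose (p i) [:- \<alpha> i / 2, 1:]
            \<and> b i * sh (- \<alpha> i) (a i) = pcompose (p i) [:\<alpha> i / 2, 1:])
   \<and> a 1 * sh (\<alpha> 1) (b 2) = b 2 * sh (- \<alpha> 2) (a 1)
   \<and> b 1 * sh (- \<alpha> 1) (a 2) = a 2 * sh (\<alpha> 2) (b 1)"

lemma smult_as_mult: "smult c p = [:c:] * p" by simp
lemma lin_as: "[:- c, 1:] = [:0,1:] - [:c::complex:]" by simp

lemma rels_kill:
  assumes c: "cond \<alpha> a b p" and r: "r \<in> kf_rels \<alpha> p"
  shows "finite (supp r) \<and> (\<forall>\<psi> e. Phi \<alpha> a b r \<psi> e = 0)"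
proof -
  note fin = supp_mono supp_sub supp_add supp_scale supp_poly_H
  note ph = Phi_sub Phi_add Phi_scale Phi_mono Phi_polyH'
  from r consider (r1) i where "i \<in> {1,2::nat}" "r = fa_sub (fa_sub (fa_mono [GH, GP i]) (fa_mono [GP i, GH])) (fa_scale (\<alpha> i) (fa_mono [GP i]))"
    | (r2) i where "i \<in> {1,2::nat}" "r = fa_add (fa_sub (fa_mono [GH, GM i]) (fa_mono [GM i, GH])) (fa_scale (\<alpha> i) (fa_mono [GM i]))"
    | (r3) i where "i \<in> {1,2::nat}" "r = fa_sub (fa_mono [GP i, GM i]) (poly_H (pcompose (p i) [:- \<alpha> i / 2, 1:]))"
    | (r4) i where "i \<in> {1,2::nat}" "r = fa_sub (fa_mono [GM i, GP i]) (poly_H (pcompose (p i) [:\<alpha> i / 2, 1:]))"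
    | (r5) "r = fa_sub (fa_mono [GP 1, GM 2]) (fa_mono [GM 2, GP 1])"
    | (r6) "r = fa_sub (fa_mono [GM 1, GP 2]) (fa_mono [GP 2, GM 1])"
    unfolding kf_rels_def by blast
  then show ?thesis
  proof cases
    case (r1 i)
    show ?thesis unfolding r1(2)
      by (simp add: fin ph sh_mult sh_pCons0 right_diff_distrib)
  next
    case (r2 i)
    show ?thesis unfolding r2(2)
      by (simp add: fin ph sh_mult sh_pCons0 right_diff_distrib distrib_left)
  next
    case (r3 i)
    have "a i * sh (\<alpha> i) (b i) = pcompose (p i) [:- \<alpha> i / 2, 1:]" using c r3(1) unfolding cond_def by blast
    then show ?thesis unfolding r3(2)
      by (simp add: fin ph sh_mult sh_sh mult.assoc[symmetric])
  next
    case (r4 i)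
    have "b i * sh (- \<alpha> i) (a i) = pcompose (p i) [:\<alpha> i / 2, 1:]" using c r4(1) unfolding cond_def by blast
    then show ?thesis unfolding r4(2)
      by (simp add: fin ph sh_mult sh_sh mult.assoc[symmetric])
  next
    case r5
    have e: "a 1 * sh (\<alpha> 1) (b 2) = b 2 * sh (- \<alpha> 2) (a 1)" using c by (simp add: cond_def)
    show ?thesis unfolding r5
      by (simp add: fin ph sh_mult sh_sh mult.assoc[symmetric] e[simplified] mv12)
  next
    case r6
    have e: "b 1 * sh (- \<alpha> 1) (a 2) = a 2 * sh (\<alpha> 2) (b 1)" using c by (simp add: cond_def)
    show ?thesis unfolding r6
      by (simp add: fin ph sh_mult sh_sh mult.assoc[symmetric] e[simplified] mv12)
  qed
qed

lemma phw_T: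
  assumes c: "cond \<alpha> a b p" and "set is \<subseteq> {1,2}"
  shows "phw \<alpha> a b (star_word (Xword is) @ Xword is) \<psi> = (\<lambda>e. Tpoly \<alpha> p is * \<psi> e)"
  using assms(2)
proof (induction "is" arbitrary: \<psi>)
  case Nil then show ?case by (simp add: star_word_def Xword_def)
next
  case (Cons i "is")
  then have i: "i \<in> {1,2}" and IH: "\<And>\<psi>. phw \<alpha> a b (star_word (Xword is) @ Xword is) \<psi> = (\<lambda>e. Tpoly \<alpha> p is * \<psi> e)"
    by auto
  have bi: "b i * sh (- \<alpha> i) (a i) = pcompose (p i) [:\<alpha> i / 2, 1:]" using c i unfolding cond_def by blast
  have shT: "sh (- \<alpha> i) (Tpoly \<alpha> p is) = pcompose (Tpoly \<alpha> p is) [:\<alpha> i, 1:]" by (simp add: sh_def)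
  show ?case
  proof
    fix e
    have "phw \<alpha> a b (star_word (Xword (i # is)) @ Xword (i # is)) \<psi> e
       = b i * sh (- \<alpha> i) (Tpoly \<alpha> p is) * sh (- \<alpha> i) (a i) * \<psi> e"
    proof -
      have "star_word (Xword (i # is)) @ Xword (i # is) = [GM i] @ (star_word (Xword is) @ Xword is) @ [GP i]"
        by (simp add: word_Cons)
      then have "phw \<alpha> a b (star_word (Xword (i # is)) @ Xword (i # is)) \<psi>
          = phw \<alpha> a b [GM i] (phw \<alpha> a b (star_word (Xword is) @ Xword is) (phw \<alpha> a b [GP i] \<psi>))"
        by (simp only: phw_append)
      then show ?thesis by (simp add: IH sh_mult sh_sh mult.assoc)
    qed
    also have "\<dots> = Tpoly \<alpha> p (i # is) * \<psi> e"
      by (simp only: Tpoly.simps shT bi[symmetric] mult_ac)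
    finally show "phw \<alpha> a b (star_word (Xword (i # is)) @ Xword (i # is)) \<psi> e = Tpoly \<alpha> p (i # is) * \<psi> e" .
  qed
qed

lemma torsion_kill:
  assumes c: "cond \<alpha> a b p" and x: "x \<in> kf_torsion \<alpha> p"
  shows "finite (supp x) \<and> (\<forall>\<psi> e. Phi \<alpha> a b x \<psi> e = 0)"
proof -
  from x obtain f where fin: "finite (supp x)" and f: "f \<noteq> 0" and I: "poly_H f \<odot> x \<in> kf_tilde_ideal \<alpha> p"
    unfolding kf_torsion_def supp_def by auto
  have "\<forall>\<psi> e. Phi \<alpha> a b (poly_H f \<odot> x) \<psi> e = 0"
    using Phi_kill_ideal[OF rels_kill[OF c]] I unfolding kf_tilde_ideal_def by blast
  then have "f * Phi \<alpha> a b x \<psi> e = 0" for \<psi> e using Phi_polyH[OF fin] by metis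
  then show ?thesis using f fin by simp
qed

lemma kf_kill:
  assumes c: "cond \<alpha> a b p" and x: "x \<in> kf_ideal \<alpha> p"
  shows "\<forall>\<psi> e. Phi \<alpha> a b x \<psi> e = 0"
  using Phi_kill_ideal[of "kf_rels \<alpha> p \<union> kf_torsion \<alpha> p" \<alpha> a b x] rels_kill[OF c] torsion_kill[OF c] x
  unfolding kf_ideal_def by blast

lemma alg_iff:
  assumes c: "cond \<alpha> a b p" and "is": "set is \<subseteq> {1,2}"
  shows "(\<exists>q :: complex poly.
            fa_sub (fa_mult (fa_mono (star_word (Xword is))) (fa_mono (Xword is)))
                   (poly_H ([:- z, 1:] * q))
            \<in> kf_ideal \<alpha> p) \<longleftrightarrow> poly (Tpoly \<alpha> p is) z = 0"
proof
  assume "\<exists>q. fa_sub (fa_mono (star_word (Xword is)) \<odot> fa_mono (Xword is)) (poly_H ([:- z, 1:] * q)) \<in> kf_ideal \<alpha> p"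
  then obtain q where q: "fa_sub (fa_mono (star_word (Xword is)) \<odot> fa_mono (Xword is)) (poly_H ([:- z, 1:] * q)) \<in> kf_ideal \<alpha> p"
    by blast
  define \<psi>0 :: W where "\<psi>0 = (\<lambda>e. if e = (0,0) then 1 else 0)"
  have "Phi \<alpha> a b (fa_sub (fa_mono (star_word (Xword is)) \<odot> fa_mono (Xword is)) (poly_H ([:- z, 1:] * q))) \<psi>0 (0,0) = 0"
    using kf_kill[OF c q] by blast
  then have "Tpoly \<alpha> p is = [:- z, 1:] * q"
    by (simp add: mono_mult_mono Phi_sub supp_mono supp_poly_H Phi_mono Phi_polyH' phw_T[OF c "is"] \<psi>0_def)
  then show "poly (Tpoly \<alpha> p is) z = 0" by simp
next
  assume "poly (Tpoly \<alpha> p is) z = 0"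
  then obtain q where q: "Tpoly \<alpha> p is = [:- z, 1:] * q" by (auto simp: poly_eq_0_iff_dvd elim!: dvdE)
  have "fcong (kf_rels \<alpha> p) (fa_mono (star_word (Xword is) @ Xword is)) (poly_H (Tpoly \<alpha> p is))"
    by (rule D[OF "is"])
  then have "fa_sub (fa_mono (star_word (Xword is)) \<odot> fa_mono (Xword is)) (poly_H ([:- z, 1:] * q)) \<in> kf_ideal \<alpha> p"
    unfolding fcong_def q mono_mult_mono kf_ideal_def by (rule fa_ideal_mono[rotated]) blast
  then show "\<exists>q. fa_sub (fa_mono (star_word (Xword is)) \<odot> fa_mono (Xword is)) (poly_H ([:- z, 1:] * q)) \<in> kf_ideal \<alpha> p"
    by blast
qed

definition val :: "nat \<Rightarrow> nat \<Rightarrow> pt \<Rightarrow> real" where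
  "val m n e = fst e * (- real n) + snd e * real m"

lemma val_add: "val m n (e + f) = val m n e + val m n f"
  by (simp add: val_def algebra_simps)

lemma Ei_cases: "i = 1 \<or> Ei i = E2" by (simp add: Ei_def)

lemma Ei_diff:
  assumes "e \<in> Ei i" "e' \<in> Ei i"
  obtains d1 d2 :: int where "e' = e + (of_int d1, of_int d2)"
proof -
  have "\<exists>d1 d2 :: int. e' = e + (of_int d1, of_int d2)"
  proof (cases "i = 1")
    case True
    then obtain a b a' b' :: int where "e = (of_int a + 1/2, of_int b)" "e' = (of_int a' + 1/2, of_int b')"
      using assms by (auto simp: Ei_def E1_def)
    then show ?thesis by (intro exI[of _ "a' - a"] exI[of _ "b' - b"]) simp
  next
    case False
    then obtain a b a' b' :: int where "e = (of_int a, of_int b + 1/2)" "e' = (of_int a', of_int b' + 1/2)"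
      using assms by (auto simp: Ei_def E2_def)
    then show ?thesis by (intro exI[of _ "a' - a"] exI[of _ "b' - b"]) simp
  qed
  then show ?thesis using that by blast
qed

lemma coprime_kernel:
  fixes m n :: nat and d1 d2 :: int
  assumes "coprime m n" "- int n * d1 + int m * d2 = 0"
  shows "\<exists>k::int. d1 = k * int m \<and> d2 = k * int n"
proof -
  have cop: "coprime (int m) (int n)" using assms(1) by simp
  have "int m dvd int n * d1" using assms(2) by (metis add.commute add_diff_cancel_right' diff_0 dvd_minus_iff dvd_triv_left minus_mult_left)
  then have "int m dvd d1" using cop coprime_dvd_mult_right_iff by blast
  then obtain k where k: "d1 = int m * k" by (auto elim: dvdE)
  show ?thesis
  proof (cases "m = 0")
    case True
    then have "n = 1" using assms(1) by simp
    then show ?thesis using k True assms(2) by (intro exI[of _ d2]) simp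
  next
    case False
    have "int m * d2 = int m * (k * int n)" using assms(2) k by (simp add: algebra_simps)
    then have "d2 = k * int n" using False by simp
    then show ?thesis using k by (intro exI[of _ k]) simp
  qed
qed

lemma Eset_shift: "e \<in> Eset \<Longrightarrow> e + (of_int a, of_int b) \<in> Eset"
proof -
  assume "e \<in> Eset"
  then show ?thesis unfolding Eset_def E1_def E2_def
    by (auto, (metis of_int_add add.commute add.left_commute)+)
qed

lemma periodic_int:
  assumes p: "periodic_config m n L" and e: "e \<in> Eset"
  shows "L (e + (of_int k * real m, of_int k * real n)) = L e"
proof -
  have P1: "\<And>e. e \<in> Eset \<Longrightarrow> L (e + (real m, real n)) = L e" using p unfolding periodic_config_def by blast
  have pos: "L (e + (of_nat j * real m, of_nat j * real n)) = L e" if "e \<in> Eset" for e j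
    using that
  proof (induction j arbitrary: e)
    case 0 then show ?case by (simp add: zero_prod_def[symmetric])
  next
    case (Suc j)
    have eq: "e + (of_nat (Suc j) * real m, of_nat (Suc j) * real n) = (e + (of_nat j * real m, of_nat j * real n)) + (real m, real n)"
      by (simp add: algebra_simps)
    have mem: "e + (of_nat j * real m, of_nat j * real n) \<in> Eset"
      using Eset_shift[OF Suc.prems, of "int j * int m" "int j * int n"] by simp
    show ?case by (simp only: eq P1[OF mem] Suc.IH[OF Suc.prems])
  qed
  show ?thesis
  proof (cases "k \<ge> 0")
    case True
    then show ?thesis using pos[OF e, of "nat k"] by simp
  next
    case False
    define j where "j = nat (- k)"
    have k: "of_int k = - real j" using False j_def by simp
    have e': "e + (- real j * real m, - real j * real n) \<in> Eset"
      using Eset_shift[OF e, of "- int j * int m" "- int j * int n"] by simp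
    have A: "L (e + (- real j * real m, - real j * real n) + (of_nat j * real m, of_nat j * real n)) = L (e + (- real j * real m, - real j * real n))"
      by (rule pos[OF e'])
    have B: "e + (- real j * real m, - real j * real n) + (of_nat j * real m, of_nat j * real n) = e"
      by (cases e) simp
    have "L (e + (- real j * real m, - real j * real n)) = L e" using A B by metis
    then show ?thesis by (simp only: k)
  qed
qed

lemma Ei_sub_Eset: "Ei i \<subseteq> Eset" by (auto simp: Ei_def Eset_def)

lemma WD:
  assumes cop: "coprime m n" and p: "periodic_config m n L"
    and e: "e \<in> Ei i" and e': "e' \<in> Ei i" and v: "val m n e = val m n e'"
  shows "L e' = L e" and "e' \<in> tcls m n e"
proof -
  obtain d1 d2 :: int where d: "e' = e + (of_int d1, of_int d2)" using Ei_diff[OF e e'] by blast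
  have "real_of_int (- int n * d1 + int m * d2) = 0" using v d by (simp add: val_def algebra_simps)
  then have "- int n * d1 + int m * d2 = 0" by linarith
  then obtain k :: int where k: "d1 = k * int m" "d2 = k * int n" using coprime_kernel[OF cop] by blast
  have e'': "e' = e + (of_int k * real m, of_int k * real n)" using d k by simp
  show "L e' = L e" unfolding e'' by (rule periodic_int[OF p]) (use e Ei_sub_Eset in auto)
  show "e' \<in> tcls m n e" unfolding tcls_def e'' by auto
qed

definition mu :: "nat \<Rightarrow> nat \<Rightarrow> (pt \<Rightarrow> nat) \<Rightarrow> nat \<Rightarrow> complex \<Rightarrow> nat" where
  "mu m n L i z = (if \<exists>e\<in>Ei i. complex_of_real (val m n e) = z
      then L (SOME e. e \<in> Ei i \<and> complex_of_real (val m n e) = z) else 0)"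

lemma mu_val:
  assumes cop: "coprime m n" and p: "periodic_config m n L" and e: "e \<in> Ei i"
  shows "mu m n L i (complex_of_real (val m n e)) = L e"
proof -
  let ?P = "\<lambda>e'. e' \<in> Ei i \<and> complex_of_real (val m n e') = complex_of_real (val m n e)"
  have "?P (SOME e'. ?P e')" by (rule someI[of ?P e]) (use e in auto)
  then have "L (SOME e'. ?P e') = L e"
    using WD(1)[OF cop p e, of "SOME e'. ?P e'"] by simp
  then show ?thesis using e unfolding mu_def by auto
qed

lemma mu_not: "\<not> (\<exists>e\<in>Ei i. complex_of_real (val m n e) = z) \<Longrightarrow> mu m n L i z = 0"
  unfolding mu_def by auto

definition base :: "nat \<Rightarrow> pt" where "base i = (if i = 1 then (1/2, 0) else (0, 1/2))"

lemma base_Ei: "base i \<in> Ei i"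
  by (auto simp: base_def Ei_def E1_def E2_def intro: exI[of _ 0])

lemma Ei_shift: "e \<in> Ei i \<Longrightarrow> e + (of_int a, of_int b) \<in> Ei i"
  unfolding Ei_def E1_def E2_def
  by (auto split: if_splits, (metis of_int_add add.commute add.left_commute)+)

lemma finite_vals:
  assumes cop: "coprime m n" and p: "periodic_config m n L"
  shows "finite (val m n ` {e \<in> Ei i. L e > 0})"
proof -
  define N :: int where "N = int m ^ 2 + int n ^ 2"
  have Npos: "N > 0"
  proof -
    have "m \<noteq> 0 \<or> n \<noteq> 0" using cop by auto
    then show ?thesis unfolding N_def by (auto simp: add_pos_nonneg add_nonneg_pos)
  qed
  obtain u v :: int where uv: "u * int m + v * int n = 1"
  proof -
    have g: "gcd (int m) (int n) = 1" using cop by (metis coprime_iff_gcd_eq_1 coprime_int_iff)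
    show ?thesis using bezout_int[of "int m" "int n"] g that by auto
  qed
  define x y where "x = - v" and "y = u"
  have xy: "- int n * x + int m * y = 1" using uv by (simp add: x_def y_def algebra_simps)
  define er :: "int \<Rightarrow> pt" where "er r = base i + (of_int (r * x), of_int (r * y))" for r
  have er_E: "er r \<in> Ei i" for r unfolding er_def by (rule Ei_shift[OF base_Ei])
  have val_er: "val m n (er r) = val m n (base i) + of_int r" for r
  proof -
    have "val m n (er r) = val m n (base i) + of_int (r * (- int n * x + int m * y))"
      unfolding er_def val_add by (simp add: val_def algebra_simps)
    moreover have "real_of_int (- int n * x + int m * y) = 1" using xy by (simp only: of_int_eq_1_iff)
    ultimately show ?thesis by (simp add: algebra_simps)
  qed
  have "\<forall>r. \<exists>K::int. \<forall>k::int. \<bar>k\<bar> > K \<longrightarrow> L (er r + (of_int k * - real n, of_int k * real m)) = 0"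
    using p er_E Ei_sub_Eset unfolding periodic_config_def by blast
  then obtain K where K: "\<And>r k. \<bar>k\<bar> > K r \<Longrightarrow> L (er r + (of_int k * - real n, of_int k * real m)) = 0"
    by metis
  have sub: "val m n ` {e \<in> Ei i. L e > 0} \<subseteq>
      (\<Union>r\<in>{0..<N}. (\<lambda>k. val m n (er r) + of_int k * of_int N) ` {- K r..K r})"
  proof
    fix z assume "z \<in> val m n ` {e \<in> Ei i. L e > 0}"
    then obtain e where e: "e \<in> Ei i" "L e > 0" "z = val m n e" by auto
    obtain d1 d2 :: int where d: "e = base i + (of_int d1, of_int d2)" using Ei_diff[OF base_Ei e(1)] by blast
    define j where "j = - int n * d1 + int m * d2"
    have ve: "val m n e = val m n (base i) + of_int j"
      unfolding d val_add j_def by (simp add: val_def algebra_simps)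
    define r k where "r = j mod N" and "k = j div N"
    have jrk: "j = r + k * N" unfolding r_def k_def by simp
    have r: "r \<in> {0..<N}" unfolding r_def using Npos by simp
    define f where "f = er r + (of_int k * - real n, of_int k * real m)"
    have fE: "f \<in> Ei i" unfolding f_def using Ei_shift[OF er_E, of r "- k * int n" "k * int m"] by simp
    have vf: "val m n f = val m n e"
    proof -
      have "val m n f = val m n (base i) + of_int r + of_int k * (real n ^ 2 + real m ^ 2)"
        unfolding f_def val_add val_er by (simp add: val_def power2_eq_square algebra_simps)
      also have "\<dots> = val m n (base i) + of_int j"
        unfolding jrk N_def by (simp add: algebra_simps)
      finally show ?thesis using ve by simp
    qed
    have "L f = L e" using WD(1)[OF cop p fE e(1)] vf by simp
    then have "L f > 0" using e by simp
    then have "\<bar>k\<bar> \<le> K r" using K[of r k] unfolding f_def by force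
    moreover have "z = val m n (er r) + of_int k * of_int N"
      using e(3) vf[symmetric] unfolding f_def val_add by (simp add: val_def N_def power2_eq_square algebra_simps)
    ultimately show "z \<in> (\<Union>r\<in>{0..<N}. (\<lambda>k. val m n (er r) + of_int k * of_int N) ` {- K r..K r})"
      using r by (auto intro!: bexI[of _ r] image_eqI[of _ _ k])
  qed
  show ?thesis by (rule finite_subset[OF sub]) auto
qed

lemma finite_mu:
  assumes cop: "coprime m n" and p: "periodic_config m n L"
  shows "finite {z. mu m n L i z > 0}"
proof (rule finite_subset)
  show "{z. mu m n L i z > 0} \<subseteq> complex_of_real ` val m n ` {e \<in> Ei i. L e > 0}"
  proof
    fix z assume z: "z \<in> {z. mu m n L i z > 0}"
    then obtain e where e: "e \<in> Ei i" "complex_of_real (val m n e) = z" using mu_not by fastforce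
    then show "z \<in> complex_of_real ` val m n ` {e \<in> Ei i. L e > 0}"
      using z mu_val[OF cop p e(1)] by auto
  qed
qed (use finite_vals[OF assms] in auto)

lemma tcls_self: "e \<in> tcls m n e"
  unfolding tcls_def by (auto intro!: exI[of _ 0] simp: zero_prod_def[symmetric])

lemma tcls_val: "x \<in> tcls m n e \<Longrightarrow> val m n x = val m n e"
  unfolding tcls_def by (auto simp: val_add) (simp add: val_def algebra_simps)

lemma tcls_L: "periodic_config m n L \<Longrightarrow> e \<in> Eset \<Longrightarrow> x \<in> tcls m n e \<Longrightarrow> L x = L e"
  unfolding tcls_def using periodic_int by blast

lemma tcls_Ei: "e \<in> Ei i \<Longrightarrow> x \<in> tcls m n e \<Longrightarrow> x \<in> Ei i"
  unfolding tcls_def using Ei_shift[of e i "_ * int m" "_ * int n"] by auto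

lemma tcls_eq: assumes "x \<in> tcls m n e" shows "tcls m n x = tcls m n e"
proof -
  obtain k :: int where k: "x = e + (of_int k * real m, of_int k * real n)" using assms unfolding tcls_def by blast
  show ?thesis
  proof (rule set_eqI)
    fix y
    show "y \<in> tcls m n x \<longleftrightarrow> y \<in> tcls m n e"
    proof
      assume "y \<in> tcls m n x"
      then obtain j :: int where "y = x + (of_int j * real m, of_int j * real n)" unfolding tcls_def by blast
      then have "y = e + (of_int (k + j) * real m, of_int (k + j) * real n)" using k by (cases e) (simp add: algebra_simps)
      then show "y \<in> tcls m n e" unfolding tcls_def by blast
    next
      assume "y \<in> tcls m n e"
      then obtain j :: int where "y = e + (of_int j * real m, of_int j * real n)" unfolding tcls_def by blast
      then have "y = x + (of_int (j - k) * real m, of_int (j - k) * real n)" using k by (cases e) (simp add: algebra_simps)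
      then show "y \<in> tcls m n x" unfolding tcls_def by blast
    qed
  qed
qed

section \<open>Products of linear factors\<close>

definition Qm :: "(complex \<Rightarrow> nat) \<Rightarrow> complex poly" where
  "Qm \<mu> = (\<Prod>z\<in>{z. \<mu> z > 0}. [:- z, 1:] ^ \<mu> z)"

lemma Qm_superset: "finite S \<Longrightarrow> {z. \<mu> z > 0} \<subseteq> S \<Longrightarrow> Qm \<mu> = (\<Prod>z\<in>S. [:- z, 1:] ^ \<mu> z)"
  unfolding Qm_def by (rule prod.mono_neutral_left) auto

lemma Qm_mult:
  assumes "finite {z. \<mu> z > 0}" "finite {z. \<nu> z > 0}"
  shows "Qm \<mu> * Qm \<nu> = Qm (\<lambda>z. \<mu> z + \<nu> z)"
proof -
  let ?S = "{z. \<mu> z > 0} \<union> {z. \<nu> z > 0}"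
  have f: "finite ?S" using assms by simp
  have "Qm \<mu> * Qm \<nu> = (\<Prod>z\<in>?S. [:- z, 1:] ^ \<mu> z) * (\<Prod>z\<in>?S. [:- z, 1:] ^ \<nu> z)"
    by (simp add: Qm_superset[OF f])
  also have "\<dots> = (\<Prod>z\<in>?S. [:- z, 1:] ^ (\<mu> z + \<nu> z))"
    by (simp add: prod.distrib[symmetric] power_add)
  also have "\<dots> = Qm (\<lambda>z. \<mu> z + \<nu> z)"
    by (rule Qm_superset[symmetric]) (use f in auto)
  finally show ?thesis .
qed

lemma pcompose_power_left: "pcompose (p ^ k) q = (pcompose p q) ^ k"
  by (induction k) (simp_all add: pcompose_mult pcompose_1)

lemma Qm_shift: "pcompose (Qm \<mu>) [:c, 1:] = Qm (\<lambda>z. \<mu> (z + c))"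
proof -
  have "pcompose (Qm \<mu>) [:c, 1:] = (\<Prod>z\<in>{z. \<mu> z > 0}. [:- (z - c), 1:] ^ \<mu> z)"
    unfolding Qm_def by (simp add: pcompose_prod pcompose_power_left pcompose_pCons algebra_simps)
  also have "\<dots> = (\<Prod>w\<in>{w. \<mu> (w + c) > 0}. [:- w, 1:] ^ \<mu> (w + c))"
    by (rule prod.reindex_bij_witness[of _ "\<lambda>w. w + c" "\<lambda>z. z - c"]) auto
  finally show ?thesis unfolding Qm_def .
qed

lemma poly_Qm: "finite {z. \<mu> z > 0} \<Longrightarrow> poly (Qm \<mu>) w = 0 \<longleftrightarrow> \<mu> w > 0"
  unfolding Qm_def by (auto simp: poly_prod prod_zero_iff)

lemma P_L_Qm:
  assumes cop: "coprime m n" and p: "periodic_config m n L"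
  shows "P_L m n L i = Qm (mu m n L i)"
proof -
  let ?S = "{C \<in> tcls m n ` Ei i. L (SOME e. e \<in> C) > 0}"
  let ?rep = "\<lambda>C. SOME e. e \<in> C"
  let ?g = "\<lambda>C. complex_of_real (val m n (?rep C))"
  have rep: "?rep C \<in> C \<and> ?rep C \<in> Ei i \<and> val m n (?rep C) = val m n e0 \<and> L (?rep C) = L e0 \<and> C = tcls m n (?rep C)"
    if "C = tcls m n e0" "e0 \<in> Ei i" for C e0
  proof -
    have "?rep C \<in> C" using that tcls_self by (metis someI)
    then show ?thesis using that tcls_Ei tcls_val tcls_L[OF p] Ei_sub_Eset tcls_eq by blast
  qed
  have fac: "(let e = ?rep C in [:- complex_of_real (fst e * - real n + snd e * real m), 1:] ^ L e)
      = [:- ?g C, 1:] ^ mu m n L i (?g C)" if CS: "C \<in> ?S" for C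
  proof -
    obtain e0 where "C = tcls m n e0" "e0 \<in> Ei i" using CS by blast
    note r = rep[OF this]
    have vv: "\<And>e. fst e * - real n + snd e * real m = val m n e" by (simp add: val_def)
    show ?thesis unfolding Let_def vv using r mu_val[OF cop p, of "?rep C" i] by simp
  qed
  have bij: "bij_betw ?g ?S {z. mu m n L i z > 0}"
  proof (rule bij_betw_imageI)
    show "inj_on ?g ?S"
    proof
      fix C C' assume C: "C \<in> ?S" and C': "C' \<in> ?S" and eq: "?g C = ?g C'"
      obtain e0 where e0: "C = tcls m n e0" "e0 \<in> Ei i" using C by blast
      obtain e1 where e1: "C' = tcls m n e1" "e1 \<in> Ei i" using C' by blast
      note r0 = rep[OF e0] and r1 = rep[OF e1]
      have "?rep C' \<in> tcls m n (?rep C)"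
        using WD(2)[OF cop p, of "?rep C" i "?rep C'"] r0 r1 eq by simp
      then show "C = C'" using r0 r1 tcls_eq by metis
    qed
    show "?g ` ?S = {z. mu m n L i z > 0}"
    proof
      show "?g ` ?S \<subseteq> {z. mu m n L i z > 0}"
      proof
        fix z assume "z \<in> ?g ` ?S"
        then obtain C where C: "C \<in> ?S" "z = ?g C" by blast
        obtain e0 where e0: "C = tcls m n e0" "e0 \<in> Ei i" using C by blast
        show "z \<in> {z. mu m n L i z > 0}" using C rep[OF e0] mu_val[OF cop p, of "?rep C" i] by simp
      qed
      show "{z. mu m n L i z > 0} \<subseteq> ?g ` ?S"
      proof
        fix z assume z: "z \<in> {z. mu m n L i z > 0}"
        then obtain e where e: "e \<in> Ei i" "complex_of_real (val m n e) = z" using mu_not by fastforce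
        have Le: "L e > 0" using z mu_val[OF cop p e(1)] e(2) by simp
        let ?C = "tcls m n e"
        note r = rep[OF refl e(1)]
        have "?C \<in> ?S" using r Le e(1) by auto
        moreover have "z = ?g ?C" using r e(2) by simp
        ultimately show "z \<in> ?g ` ?S" by blast
      qed
    qed
  qed
  have "P_L m n L i = (\<Prod>C\<in>?S. [:- ?g C, 1:] ^ mu m n L i (?g C))"
    unfolding P_L_def by (rule prod.cong[OF refl fac])
  also have "\<dots> = Qm (mu m n L i)"
    unfolding Qm_def by (rule prod.reindex_bij_betw[OF bij])
  finally show ?thesis .
qed

section \<open>The vertex identity\<close>

lemma vertex_at:
  assumes p: "periodic_config m n L"
  shows "L (of_int a, of_int b - 1/2) + L (of_int a + 1/2, of_int b - 1)
       = L (of_int a + 1, of_int b - 1/2) + L (of_int a + 1/2, of_int b)"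
proof -
  define v :: pt where "v = (of_int a + 1/2, of_int (b - 1) + 1/2)"
  have vV: "v \<in> Vset" unfolding Vset_def v_def by blast
  have "L (v - (1/2, 0)) + L (v - (0, 1/2)) = L (v + (1/2, 0)) + L (v + (0, 1/2))"
    using p vV unfolding periodic_config_def by blast
  moreover have "v - (1/2, 0) = (of_int a, of_int b - 1/2)" by (simp add: v_def)
  moreover have "v - (0, 1/2) = (of_int a + 1/2, of_int b - 1)" by (simp add: v_def)
  moreover have "v + (1/2, 0) = (of_int a + 1, of_int b - 1/2)" by (simp add: v_def)
  moreover have "v + (0, 1/2) = (of_int a + 1/2, of_int b)" by (simp add: v_def)
  ultimately show ?thesis by simp
qed

lemma E1_memI: "x = of_int a + 1/2 \<Longrightarrow> y = of_int b \<Longrightarrow> (x, y) \<in> Ei 1"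
  by (auto simp: Ei_def E1_def)
lemma E2_memI: "x = of_int a \<Longrightarrow> y = of_int b + 1/2 \<Longrightarrow> (x, y) \<in> Ei 2"
  by (auto simp: Ei_def E2_def)

lemma E1_mem: "(of_int a + 1/2, of_int b) \<in> Ei 1" by (rule E1_memI[of _ a _ b]) simp_all
lemma E1_mem': "(of_int a + 1/2, of_int b - 1) \<in> Ei 1" by (rule E1_memI[of _ a _ "b - 1"]) simp_all
lemma E2_mem: "(of_int a, of_int b - 1/2) \<in> Ei 2" by (rule E2_memI[of _ a _ "b - 1"]) simp_all
lemma E2_mem': "(of_int a + 1, of_int b - 1/2) \<in> Ei 2" by (rule E2_memI[of _ "a + 1" _ "b - 1"]) simp_all

lemma mu_identity:
  assumes cop: "coprime m n" and p: "periodic_config m n L"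
  shows "mu m n L 1 (z + (- of_nat n) / 2) + mu m n L 2 (z + (- of_nat n) - of_nat m / 2)
       = mu m n L 2 (z - of_nat m / 2) + mu m n L 1 (z + (- of_nat n) / 2 - of_nat m)"
proof (cases "\<exists>a b :: int. z = complex_of_real (val m n (of_int a, of_int b))")
  case True
  then obtain a b :: int where z: "z = complex_of_real (val m n (of_int a, of_int b))" by blast
  have 1: "z + (- of_nat n) / 2 = complex_of_real (val m n (of_int a + 1/2, of_int b))"
    unfolding z by (simp add: val_def algebra_simps)
  have 2: "z + (- of_nat n) - of_nat m / 2 = complex_of_real (val m n (of_int a + 1, of_int b - 1/2))"
    unfolding z by (simp add: val_def algebra_simps)
  have 3: "z - of_nat m / 2 = complex_of_real (val m n (of_int a, of_int b - 1/2))"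
    unfolding z by (simp add: val_def algebra_simps)
  have 4: "z + (- of_nat n) / 2 - of_nat m = complex_of_real (val m n (of_int a + 1/2, of_int b - 1))"
    unfolding z by (simp add: val_def algebra_simps)
  show ?thesis unfolding 4 unfolding 3 unfolding 2 unfolding 1
    using mu_val[OF cop p E1_mem] mu_val[OF cop p E1_mem'] mu_val[OF cop p E2_mem] mu_val[OF cop p E2_mem']
      vertex_at[OF p, of a b] by simp
next
  case False
  have n1: "mu m n L 1 (z + (- of_nat n) / 2) = 0"
  proof (rule mu_not, rule notI)
    assume "\<exists>e\<in>Ei 1. complex_of_real (val m n e) = z + (- of_nat n) / 2"
    then obtain a b :: int where "complex_of_real (val m n (of_int a + 1/2, of_int b)) = z + (- of_nat n) / 2"
      by (auto simp: Ei_def E1_def)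
    then have "z = complex_of_real (val m n (of_int a, of_int b))" by (simp add: val_def algebra_simps)
    then show False using False by blast
  qed
  have n2: "mu m n L 2 (z + (- of_nat n) - of_nat m / 2) = 0"
  proof (rule mu_not, rule notI)
    assume "\<exists>e\<in>Ei 2. complex_of_real (val m n e) = z + (- of_nat n) - of_nat m / 2"
    then obtain a b :: int where "complex_of_real (val m n (of_int a, of_int b + 1/2)) = z + (- of_nat n) - of_nat m / 2"
      by (auto simp: Ei_def E2_def)
    then have "z = complex_of_real (val m n (of_int (a - 1), of_int (b + 1)))" by (simp add: val_def algebra_simps)
    then show False using False by blast
  qed
  have n3: "mu m n L 2 (z - of_nat m / 2) = 0"
  proof (rule mu_not, rule notI)
    assume "\<exists>e\<in>Ei 2. complex_of_real (val m n e) = z - of_nat m / 2"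
    then obtain a b :: int where "complex_of_real (val m n (of_int a, of_int b + 1/2)) = z - of_nat m / 2"
      by (auto simp: Ei_def E2_def)
    then have "z = complex_of_real (val m n (of_int a, of_int (b + 1)))" by (simp add: val_def algebra_simps)
    then show False using False by blast
  qed
  have n4: "mu m n L 1 (z + (- of_nat n) / 2 - of_nat m) = 0"
  proof (rule mu_not, rule notI)
    assume "\<exists>e\<in>Ei 1. complex_of_real (val m n e) = z + (- of_nat n) / 2 - of_nat m"
    then obtain a b :: int where "complex_of_real (val m n (of_int a + 1/2, of_int b)) = z + (- of_nat n) / 2 - of_nat m"
      by (auto simp: Ei_def E1_def)
    then have "z = complex_of_real (val m n (of_int a, of_int (b + 1)))" by (simp add: val_def algebra_simps)
    then show False using False by blast
  qed
  show ?thesis using n1 n2 n3 n4 by simp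
qed

definition aL :: "nat \<Rightarrow> nat \<Rightarrow> (pt \<Rightarrow> nat) \<Rightarrow> nat \<Rightarrow> complex poly" where
  "aL m n L i = (if i = 1 then 1 else pcompose (P_L m n L 2) [:- alphaL m n 2 / 2, 1:])"
definition bL :: "nat \<Rightarrow> nat \<Rightarrow> (pt \<Rightarrow> nat) \<Rightarrow> nat \<Rightarrow> complex poly" where
  "bL m n L i = (if i = 1 then pcompose (P_L m n L 1) [:alphaL m n 1 / 2, 1:] else 1)"

lemma sh_pc: "sh c (pcompose f [:d, 1:]) = pcompose f [:d - c, 1:]"
  by (simp add: sh_def pcompose_assoc[symmetric] pcompose_pCons)

lemma finite_shift: "finite {z. \<mu> z > (0::nat)} \<Longrightarrow> finite {z. \<mu> (z + (c::complex)) > 0}"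
  by (rule finite_subset[of _ "(\<lambda>w. w - c) ` {z. \<mu> z > 0}"]) (auto intro: image_eqI[of _ _ "_ + c"])

lemma cond_L:
  assumes cop: "coprime m n" and p: "periodic_config m n L"
  shows "cond (alphaL m n) (aL m n L) (bL m n L) (P_L m n L)"
proof -
  let ?\<alpha> = "alphaL m n"
  have a1: "?\<alpha> 1 = - of_nat n" and a2: "?\<alpha> 2 = of_nat m" unfolding alphaL_def by simp_all
  note P = P_L_Qm[OF cop p]
  note fin = finite_shift[OF finite_mu[OF cop p]]
  have F: "pcompose (P_L m n L 1) [:?\<alpha> 1 / 2, 1:] * pcompose (P_L m n L 2) [:- ?\<alpha> 2 / 2 - - ?\<alpha> 1, 1:]
      = pcompose (P_L m n L 2) [:- ?\<alpha> 2 / 2, 1:] * pcompose (P_L m n L 1) [:?\<alpha> 1 / 2 - ?\<alpha> 2, 1:]"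
  proof -
    let ?m1 = "mu m n L 1" and ?m2 = "mu m n L 2"
    have "(\<lambda>z. ?m1 (z + ?\<alpha> 1 / 2) + ?m2 (z + (- ?\<alpha> 2 / 2 - - ?\<alpha> 1)))
        = (\<lambda>z. ?m2 (z + - ?\<alpha> 2 / 2) + ?m1 (z + (?\<alpha> 1 / 2 - ?\<alpha> 2)))"
    proof
      fix z
      have e1: "z + ?\<alpha> 1 / 2 = z + (- of_nat n) / 2" unfolding a1 by simp
      have e2: "z + (- ?\<alpha> 2 / 2 - - ?\<alpha> 1) = z + (- of_nat n) - of_nat m / 2" unfolding a1 a2 by simp
      have e3: "z + - ?\<alpha> 2 / 2 = z - of_nat m / 2" unfolding a2 by simp
      have e4: "z + (?\<alpha> 1 / 2 - ?\<alpha> 2) = z + (- of_nat n) / 2 - of_nat m" unfolding a1 a2 by simp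
      show "?m1 (z + ?\<alpha> 1 / 2) + ?m2 (z + (- ?\<alpha> 2 / 2 - - ?\<alpha> 1))
          = ?m2 (z + - ?\<alpha> 2 / 2) + ?m1 (z + (?\<alpha> 1 / 2 - ?\<alpha> 2))"
        unfolding e1 e2 e3 e4 by (rule mu_identity[OF cop p])
    qed
    then show ?thesis
      unfolding P Qm_shift Qm_mult[OF fin fin] by (rule arg_cong[where f = Qm])
  qed
  show ?thesis
    unfolding cond_def aL_def bL_def
    using F by (simp add: sh_pc algebra_simps)
qed

lemma Tpoly_root:
  "poly (Tpoly \<alpha> p is) z = 0 \<longleftrightarrow>
     (\<exists>r<length is. poly (p (is ! r)) (z + (\<Sum>k<r. \<alpha> (is ! k)) + \<alpha> (is ! r) / 2) = 0)"
proof (induction "is" arbitrary: z)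
  case Nil then show ?case by simp
next
  case (Cons i "is")
  have "poly (Tpoly \<alpha> p (i # is)) z = 0 \<longleftrightarrow>
      poly (Tpoly \<alpha> p is) (z + \<alpha> i) = 0 \<or> poly (p i) (z + \<alpha> i / 2) = 0"
    by (simp add: poly_pcompose add.commute)
  also have "\<dots> \<longleftrightarrow> (\<exists>r<length (i # is). poly (p ((i # is) ! r)) (z + (\<Sum>k<r. \<alpha> ((i # is) ! k)) + \<alpha> ((i # is) ! r) / 2) = 0)"
  proof -
    have "(\<exists>r<length (i # is). poly (p ((i # is) ! r)) (z + (\<Sum>k<r. \<alpha> ((i # is) ! k)) + \<alpha> ((i # is) ! r) / 2) = 0)
      \<longleftrightarrow> poly (p i) (z + \<alpha> i / 2) = 0 \<or>
          (\<exists>r<length is. poly (p (is ! r)) (z + (\<Sum>k<Suc r. \<alpha> ((i # is) ! k)) + \<alpha> (is ! r) / 2) = 0)"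
      by (auto simp: less_Suc_eq_0_disj)
    also have "(\<lambda>r. \<Sum>k<Suc r. \<alpha> ((i # is) ! k)) = (\<lambda>r. \<alpha> i + (\<Sum>k<r. \<alpha> (is ! k)))"
      by (rule ext) (simp only: sum.lessThan_Suc_shift nth_Cons_0 nth_Cons_Suc)
    finally show ?thesis using Cons.IH[of "z + \<alpha> i"] by (auto simp: add_ac)
  qed
  finally show ?case .
qed

lemma lam_lift_int:
  assumes cop: "coprime m n"
  shows "\<exists>a b :: int. lam_lift m n lam = (of_int a, of_int b) \<and> - int n * a + int m * b = lam"
proof -
  obtain u v :: int where uv: "u * int m + v * int n = 1"
  proof -
    have g: "gcd (int m) (int n) = 1" using cop by (metis coprime_iff_gcd_eq_1 coprime_int_iff)
    show ?thesis using bezout_int[of "int m" "int n"] g that by auto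
  qed
  have ex: "\<exists>ab :: int \<times> int. - int n * fst ab + int m * snd ab = lam"
    by (rule exI[of _ "(- v * lam, u * lam)"]) (use uv in \<open>simp add: algebra_simps, metis mult.commute mult.left_commute distrib_left mult_1_right add.commute\<close>)
  define ab where "ab = (SOME ab :: int \<times> int. - int n * fst ab + int m * snd ab = lam)"
  have "- int n * fst ab + int m * snd ab = lam" unfolding ab_def by (rule someI_ex[OF ex])
  moreover have "lam_lift m n lam = (of_int (fst ab), of_int (snd ab))"
    unfolding lam_lift_def ab_def[symmetric] by (simp add: case_prod_beta)
  ultimately show ?thesis by blast
qed

definition half :: "nat \<Rightarrow> pt" where "half i = (if i = 1 then (1/2, 0) else (0, 1/2))"

lemma psum_Suc: "psum P is (Suc r) = psum P is r + unitv (is ! r)"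
  by (simp add: psum_def add.assoc)

lemma psum_int: "\<exists>a b :: int. psum (of_int a0, of_int b0) is r = (of_int a, of_int b)"
proof (induction r)
  case 0 then show ?case by (auto simp: psum_def)
next
  case (Suc r)
  then obtain a b :: int where ab: "psum (of_int a0, of_int b0) is r = (of_int a, of_int b)" by blast
  show ?case
  proof (cases "is ! r = 1")
    case True then show ?thesis using ab by (auto simp: psum_Suc unitv_def intro!: exI[of _ "a + 1"])
  next
    case False then show ?thesis using ab by (auto simp: psum_Suc unitv_def intro!: exI[of _ "b + 1"])
  qed
qed

lemma val_sum: "val m n (\<Sum>k\<in>S. f k) = (\<Sum>k\<in>S. val m n (f k))"
proof (induct S rule: infinite_finite_induct)
  case (insert x F) then show ?case by (simp add: val_add)
qed (simp_all add: val_def)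

lemma val_unitv: "complex_of_real (val m n (unitv i)) = alphaL m n i"
  by (simp add: val_def unitv_def alphaL_def)

lemma val_half: "complex_of_real (val m n (half i)) = alphaL m n i / 2"
  by (simp add: val_def half_def alphaL_def)

definition mid :: "nat \<Rightarrow> nat \<Rightarrow> nat list \<Rightarrow> int \<Rightarrow> nat \<Rightarrow> pt" where
  "mid m n is lam r = psum (lam_lift m n lam) is r + half (is ! r)"

lemma val_mid:
  assumes cop: "coprime m n"
  shows "complex_of_real (val m n (mid m n is lam r))
     = of_int lam + (\<Sum>k<r. alphaL m n (is ! k)) + alphaL m n (is ! r) / 2"
proof -
  obtain a b :: int where ab: "lam_lift m n lam = (of_int a, of_int b)" "- int n * a + int m * b = lam"
    using lam_lift_int[OF cop] by blast
  have "complex_of_real (val m n (lam_lift m n lam)) = of_int lam"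
  proof -
    have "val m n (lam_lift m n lam) = of_int (- int n * a + int m * b)"
      unfolding ab(1) by (simp add: val_def algebra_simps)
    then have "val m n (lam_lift m n lam) = of_int lam" by (simp only: ab(2))
    then show ?thesis by simp
  qed
  then show ?thesis
    unfolding mid_def psum_def val_add val_sum of_real_add of_real_sum val_unitv val_half by simp
qed

lemma mid_Ei:
  assumes cop: "coprime m n"
  shows "mid m n is lam r \<in> Ei (is ! r)"
proof -
  obtain a0 b0 :: int where ab: "lam_lift m n lam = (of_int a0, of_int b0)"
    using lam_lift_int[OF cop] by blast
  obtain a b :: int where p: "psum (lam_lift m n lam) is r = (of_int a, of_int b)"
    using psum_int[of a0 b0 "is" r] ab by auto
  show ?thesis
  proof (cases "is ! r = 1")
    case True then show ?thesis unfolding mid_def p half_def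
      using E1_memI[of "of_int a + 1/2" a "of_int b" b] by simp
  next
    case False
    then have "Ei (is ! r) = E2" by (simp add: Ei_def)
    moreover have "(of_int a, of_int b + 1/2) \<in> Ei 2" by (rule E2_memI[of _ a _ b]) simp_all
    ultimately show ?thesis unfolding mid_def p half_def using False by (simp add: Ei_def)
  qed
qed

lemma root_iff_mid:
  assumes cop: "coprime m n" and p: "periodic_config m n L"
  shows "poly (Tpoly (alphaL m n) (P_L m n L) is) (of_int lam) = 0 \<longleftrightarrow>
    (\<exists>r<length is. L (mid m n is lam r) > 0)"
  unfolding Tpoly_root val_mid[OF cop, symmetric] P_L_Qm[OF cop p] poly_Qm[OF finite_mu[OF cop p]]
  using mu_val[OF cop p mid_Ei[OF cop]] by simp

lemma H3: fixes b d :: int assumes "\<bar>(of_int b::real) - of_int d\<bar> \<le> 1/2" shows "b = d"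
proof -
  have h: "of_int b - of_int d \<le> (1/2::real)" "of_int d - of_int b \<le> (1/2::real)"
    using assms abs_le_iff minus_diff_eq by metis+
  have "real_of_int (b - d) < 1" "real_of_int (d - b) < 1" using h by simp_all
  then have "b - d < 1" "d - b < 1" by (simp_all only: of_int_less_1_iff)
  then show ?thesis by simp
qed

lemma H2: fixes a c :: int shows "(of_int c::real) + 1/2 \<noteq> of_int a"
proof
  assume "(of_int c::real) + 1/2 = of_int a"
  then have "real_of_int (2 * c + 1) = real_of_int (2 * a)" by simp
  then have "2 * c + 1 = 2 * a" by (simp only: of_int_eq_iff)
  then show False by presburger
qed

lemma H1: fixes a c :: int and t :: real assumes "of_int c + 1/2 = of_int a + t" "0 \<le> t" "t \<le> 1" shows "c = a"
  using H3[of c a] assms by (simp add: abs_if) 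

lemma G:
  fixes a b :: int
  assumes x: "x \<in> closed_segment (of_int a, of_int b) ((of_int a, of_int b) + unitv i)"
    and e: "e \<in> Eset" and xe: "x \<in> edge_seg e"
  shows "e = (of_int a, of_int b) + half i"
proof -
  obtain t :: real where t: "0 \<le> t" "t \<le> 1" "x = (1 - t) *\<^sub>R (of_int a, of_int b) + t *\<^sub>R ((of_int a, of_int b) + unitv i)"
    using x unfolding in_segment by blast
  have xt: "x = (of_int a + t * fst (unitv i), of_int b + t * snd (unitv i))"
    unfolding t(3) by (cases "unitv i") (simp add: algebra_simps)
  consider (e1) c d :: int where "e = (of_int c + 1/2, of_int d)" "e \<in> E1"
    | (e2) c d :: int where "e = (of_int c, of_int d + 1/2)" "e \<notin> E1"
    using e unfolding Eset_def E1_def E2_def by blast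
  then show ?thesis
  proof cases
    case (e1 c d)
    have xs: "fst x = of_int c + 1/2" "\<bar>snd x - of_int d\<bar> \<le> 1/2"
      using xe e1 unfolding edge_seg_def by auto
    show ?thesis
    proof (cases "i = 1")
      case True
      have "of_int c + 1/2 = of_int a + t" "\<bar>of_int b - of_int d\<bar> \<le> (1/2::real)"
        using xs xt True by (simp_all add: unitv_def)
      then have "c = a" "b = d" using H1 H3 t by blast+
      then show ?thesis using e1 True by (simp add: half_def)
    next
      case False
      have "of_int c + 1/2 = (of_int a :: real)" using xs xt False by (simp add: unitv_def)
      then show ?thesis using H2 by blast
    qed
  next
    case (e2 c d)
    have xs: "snd x = of_int d + 1/2" "\<bar>fst x - of_int c\<bar> \<le> 1/2"
      using xe e2 unfolding edge_seg_def by auto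
    show ?thesis
    proof (cases "i = 1")
      case True
      have "of_int d + 1/2 = (of_int b :: real)" using xs xt True by (simp add: unitv_def)
      then show ?thesis using H2 by blast
    next
      case False
      have "of_int d + 1/2 = of_int b + t" "\<bar>of_int a - of_int c\<bar> \<le> (1/2::real)"
        using xs xt False by (simp_all add: unitv_def)
      then have "d = b" "a = c" using H1 H3 t by blast+
      then show ?thesis using e2 False by (simp add: half_def)
    qed
  qed
qed

lemma half_scale: "half i = (1/2) *\<^sub>R unitv i" by (simp add: half_def unitv_def)

lemma geo_iff:
  assumes cop: "coprime m n" and p: "periodic_config m n L"
  shows "face_path m n is lam \<inter> Lbar m n L \<noteq> {} \<longleftrightarrow> (\<exists>r<length is. L (mid m n is lam r) > 0)"
proof -
  let ?P = "\<lambda>r. psum (lam_lift m n lam) is r"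
  obtain a0 b0 :: int where ab0: "lam_lift m n lam = (of_int a0, of_int b0)"
    using lam_lift_int[OF cop] by blast
  have Pint: "\<exists>a b :: int. ?P r = (of_int a, of_int b)" for r
    using psum_int[of a0 b0 "is" r] ab0 by simp
  have FP: "face_path m n is lam = tcls m n ` (\<Union>r\<in>{..<length is}. closed_segment (?P r) (?P r + unitv (is ! r)))"
  proof -
    have "(\<Union>r\<in>{1..length is}. closed_segment (?P (r - 1)) (?P r)) = (\<Union>r\<in>{..<length is}. closed_segment (?P r) (?P (Suc r)))"
    proof -
      have s: "Suc ` {..<length is} = {1..length is}"
        by (simp add: lessThan_atLeast0 atLeastLessThanSuc_atLeastAtMost)
      show ?thesis unfolding s[symmetric] by simp
    qed
    then show ?thesis unfolding face_path_def psum_Suc by simp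
  qed
  show ?thesis
  proof
    assume "face_path m n is lam \<inter> Lbar m n L \<noteq> {}"
    then obtain C where C1: "C \<in> face_path m n is lam" and C2: "C \<in> Lbar m n L" by blast
    from C1 obtain r x where r: "r < length is" and x: "x \<in> closed_segment (?P r) (?P r + unitv (is ! r))" and Cx: "C = tcls m n x"
      unfolding FP by blast
    from C2 obtain e y where e: "e \<in> Eset" "L e > 0" and y: "y \<in> edge_seg e" and Cy: "C = tcls m n y"
      unfolding Lbar_def by blast
    have "y \<in> tcls m n x" using Cx Cy tcls_self by metis
    then obtain k :: int where k: "y = x + (of_int k * real m, of_int k * real n)" unfolding tcls_def by blast
    define kv :: pt where "kv = (of_int k * real m, of_int k * real n)"
    obtain a b :: int where Pr: "?P r = (of_int a, of_int b)" using Pint by blast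
    have y': "y \<in> closed_segment (of_int (a + k * int m), of_int (b + k * int n)) ((of_int (a + k * int m), of_int (b + k * int n)) + unitv (is ! r))"
    proof -
      have "kv + x \<in> closed_segment (kv + ?P r) (kv + (?P r + unitv (is ! r)))" using x by simp
      moreover have "kv + ?P r = (of_int (a + k * int m), of_int (b + k * int n))" unfolding kv_def Pr by simp
      moreover have "kv + x = y" using k kv_def by (simp add: add.commute)
      ultimately show ?thesis by (metis add.assoc)
    qed
    have eG: "e = (of_int (a + k * int m), of_int (b + k * int n)) + half (is ! r)"
      by (rule G[OF y' e(1) y])
    have "e = mid m n is lam r + kv" unfolding eG mid_def Pr kv_def by (simp add: algebra_simps)
    then have "L e = L (mid m n is lam r)"
      unfolding kv_def using periodic_int[OF p, of "mid m n is lam r" k] mid_Ei[OF cop] Ei_sub_Eset by blast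
    then show "\<exists>r<length is. L (mid m n is lam r) > 0" using r e(2) by auto
  next
    assume "\<exists>r<length is. L (mid m n is lam r) > 0"
    then obtain r where r: "r < length is" and L: "L (mid m n is lam r) > 0" by blast
    let ?x = "mid m n is lam r"
    have xs: "?x \<in> closed_segment (?P r) (?P r + unitv (is ! r))"
      unfolding in_segment mid_def half_scale
      by (rule exI[of _ "1/2"]) (simp add: algebra_simps, simp add: scaleR_add_left[symmetric])
    have xE: "?x \<in> Eset" using mid_Ei[OF cop] Ei_sub_Eset by blast
    have xx: "?x \<in> edge_seg ?x" by (cases ?x) (auto simp: edge_seg_def)
    have "tcls m n ?x \<in> face_path m n is lam" unfolding FP using r xs by blast
    moreover have "tcls m n ?x \<in> Lbar m n L" unfolding Lbar_def using xE L xx by blast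
    ultimately show "face_path m n is lam \<inter> Lbar m n L \<noteq> {}" by blast
  qed
qed

theorem mainTheorem15:
  fixes m n :: nat and L :: "real \<times> real \<Rightarrow> nat" and "is" :: "nat list" and lam :: int
  assumes "coprime m n"
    and "periodic_config m n L"
    and "set is \<subseteq> {1, 2}"
  shows "(\<exists>q :: complex poly.
            fa_sub (fa_mult (fa_mono (star_word (Xword is))) (fa_mono (Xword is)))
                   (poly_H ([:- of_int lam, 1:] * q))
            \<in> kf_ideal (alphaL m n) (P_L m n L))
         \<longleftrightarrow> face_path m n is lam \<inter> Lbar m n L \<noteq> {}"
  unfolding alg_iff[OF cond_L[OF assms(1,2)] assms(3)] root_iff_mid[OF assms(1,2)] geo_iff[OF assms(1,2)]
  by (rule refl)

end
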